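(* Let $\kappa$ be a regular infinite cardinal and $\mu$ a singular cardinal with $\mathrm{cf}(\mu)=\kappa$. The spaces $({}^{\mu}\kappa,\kappa)$ and $({}^{\mu}\mu,\kappa)$ are homeomorphic if and only if $\mu\le 2^{<\kappa}$.
   Context: For ordinals $\delta,\rho$, ${}^{\delta}\rho$ is the set of functions $\delta\to\rho$; for a partial function $s\colon\delta\rightharpoonup\rho$, $[s]=\{f\in{}^{\delta}\rho: s\subseteq f\}$. The ${<}\kappa$-box topology on ${}^{\delta}\rho$ has base $\{[s]: |\mathrm{dom}(s)|<\kappa\}$; $(X,\kappa)$ denotes $X$ with this topology. *)

theory Defs
  imports "HOL-Analysis.Analysis" "HOL-Library.FuncSet"
begin

text \<open>Cardinals are represented by cardinal well-orders (Card_order) from Main.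
  The ordinal kappa (resp. mu) is the field of a card order rk (resp. rm).\<close>

definition basic_box :: "'i set \<Rightarrow> 'a set \<Rightarrow> ('i \<Rightarrow> 'a option) \<Rightarrow> ('i \<Rightarrow> 'a) set" where
  "basic_box D R s = {f \<in> D \<rightarrow>\<^sub>E R. \<forall>i\<in>dom s. s i = Some (f i)}"

definition box_top :: "'i set \<Rightarrow> 'a set \<Rightarrow> 'c rel \<Rightarrow> ('i \<Rightarrow> 'a) topology" where
  "box_top D R k = topology_generated_by
     {basic_box D R s | s. dom s \<subseteq> D \<and> ran s \<subseteq> R \<and> ordLess2 (card_of (dom s)) k}"

definition cof_is :: "'m rel \<Rightarrow> 'k rel \<Rightarrow> bool" where
  "cof_is rm rk \<longleftrightarrow>
     (\<exists>C. C \<subseteq> Field rm \<and> cofinal C rm \<and> ordIso2 (card_of C) rk) \<and>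
     (\<forall>C. C \<subseteq> Field rm \<and> cofinal C rm \<longrightarrow> ordLeq2 rk (card_of C))"

text \<open>The set of all functions alpha -> 2 for ordinals alpha < kappa (alpha being a proper
  initial segment of Field rk); its cardinality is 2^{<kappa}.\<close>
definition two_less :: "'k rel \<Rightarrow> ('k \<Rightarrow> bool option) set" where
  "two_less rk = {f. \<exists>a \<in> Field rk. dom f = underS rk a}"

end

theory Submission
  imports Defs
begin

unbundle cardinal_syntax


lemma small_Un:
  assumes "Card_order k" "\<not> finite (Field k)" "|A| <o k" "|B| <o k"
  shows "|A \<union> B| <o k"
  using assms card_of_Un_ordLess_infinite_Field by blast

lemma small_finite:
  assumes "Card_order k" "\<not> finite (Field k)" "finite A"
  shows "|A| <o k"
  using finite_ordLess_infinite[of "|A|" k] assms card_of_Well_order[of A]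
    card_order_on_well_order_on Field_card_of by metis

lemma small_subset:
  assumes "|B| <o k" "A \<subseteq> B"
  shows "|A| <o k"
  using assms card_of_mono1 ordLeq_ordLess_trans by blast

lemma small_image:
  assumes "|B| <o k"
  shows "|f ` B| <o k"
  using assms card_of_image ordLeq_ordLess_trans by blast

lemma basic_box_sub: "basic_box D R s \<subseteq> D \<rightarrow>\<^sub>E R"
  unfolding basic_box_def by (rule Collect_restrict)
lemma ran_restr: "ran (\<lambda>i. if i \<in> S then Some (f i) else None) = f ` S"
  unfolding ran_def by (auto split: if_splits)
lemma dom_restr: "dom (\<lambda>i. if i \<in> S then Some (f i) else None) = S"
  by (auto simp: dom_def)
lemma mem_basic_box_restr: "g \<in> basic_box D R (\<lambda>i. if i \<in> S then Some (f i) else None) \<longleftrightarrow> g \<in> D \<rightarrow>\<^sub>E R \<and> (\<forall>i\<in>S. g i = f i)"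
  unfolding basic_box_def dom_restr by auto

lemma box_local_basic:
  assumes "t' = basic_box D R t" "dom t \<subseteq> D" "|dom t| <o k" "f \<in> t'"
  shows "\<exists>S\<subseteq>D. |S| <o k \<and> (\<forall>g\<in>D \<rightarrow>\<^sub>E R. (\<forall>i\<in>S. g i = f i) \<longrightarrow> g \<in> t')"
proof (intro exI[of _ "dom t"] conjI ballI impI)
  fix g assume g: "g \<in> D \<rightarrow>\<^sub>E R" "\<forall>i\<in>dom t. g i = f i"
  have "\<forall>i\<in>dom t. t i = Some (f i)" using assms(4) unfolding assms(1) basic_box_def by blast
  then show "g \<in> t'" unfolding assms(1) basic_box_def using g by simp
qed (use assms in auto)

lemma openin_box_top_imp:
  assumes k: "Card_order k" "\<not> finite (Field k)"
    and "openin (box_top D R k) U"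
  shows "U \<subseteq> D \<rightarrow>\<^sub>E R \<and>
     (\<forall>f\<in>U. \<exists>S\<subseteq>D. |S| <o k \<and> (\<forall>g\<in>D \<rightarrow>\<^sub>E R. (\<forall>i\<in>S. g i = f i) \<longrightarrow> g \<in> U))"
proof -
  have "generate_topology_on {basic_box D R s | s. dom s \<subseteq> D \<and> ran s \<subseteq> R \<and> |dom s| <o k} U"
    using assms(3) unfolding box_top_def openin_topology_generated_by_iff .
  then show ?thesis
  proof (induction rule: generate_topology_on.induct)
    case Empty
    then show ?case by simp
  next
    case (Int a b)
    show ?case
    proof (intro conjI ballI)
      show "a \<inter> b \<subseteq> D \<rightarrow>\<^sub>E R" using Int.IH by blast
      fix f assume f: "f \<in> a \<inter> b"
      have fa: "f \<in> a" and fb: "f \<in> b" using f by auto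
      obtain S1 where "S1 \<subseteq> D" "|S1| <o k" "\<forall>g\<in>D \<rightarrow>\<^sub>E R. (\<forall>i\<in>S1. g i = f i) \<longrightarrow> g \<in> a"
        using bspec[OF conjunct2[OF Int.IH(1)] fa] by blast
      moreover obtain S2 where "S2 \<subseteq> D" "|S2| <o k" "\<forall>g\<in>D \<rightarrow>\<^sub>E R. (\<forall>i\<in>S2. g i = f i) \<longrightarrow> g \<in> b"
        using bspec[OF conjunct2[OF Int.IH(2)] fb] by blast
      moreover have "|S1 \<union> S2| <o k" using small_Un[OF k] calculation by blast
      ultimately show "\<exists>S\<subseteq>D. |S| <o k \<and> (\<forall>g\<in>D \<rightarrow>\<^sub>E R. (\<forall>i\<in>S. g i = f i) \<longrightarrow> g \<in> a \<inter> b)"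
        by (intro exI[of _ "S1 \<union> S2"]) simp
    qed
  next
    case (UN K)
    show ?case
    proof (intro conjI ballI)
      show "\<Union>K \<subseteq> D \<rightarrow>\<^sub>E R" using UN.IH by blast
      fix f assume "f \<in> \<Union>K"
      then obtain a where a: "a \<in> K" "f \<in> a" by blast
      then obtain S where "S\<subseteq>D" "|S| <o k" "\<forall>g\<in>D \<rightarrow>\<^sub>E R. (\<forall>i\<in>S. g i = f i) \<longrightarrow> g \<in> a"
        using bspec[OF conjunct2[OF UN.IH[OF a(1)]] a(2)] by blast
      then show "\<exists>S\<subseteq>D. |S| <o k \<and> (\<forall>g\<in>D \<rightarrow>\<^sub>E R. (\<forall>i\<in>S. g i = f i) \<longrightarrow> g \<in> \<Union>K)"
        using a(1) by blast
    qed
  next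
    case (Basis s)
    then obtain t where t: "s = basic_box D R t" "dom t \<subseteq> D" "|dom t| <o k" by blast
    show ?case
    proof (intro conjI ballI)
      show "s \<subseteq> D \<rightarrow>\<^sub>E R" unfolding t by (rule basic_box_sub)
      fix f assume "f \<in> s"
      then show "\<exists>S\<subseteq>D. |S| <o k \<and> (\<forall>g\<in>D \<rightarrow>\<^sub>E R. (\<forall>i\<in>S. g i = f i) \<longrightarrow> g \<in> s)"
        by (rule box_local_basic[OF t(1,2,3)])
    qed
  qed
qed

lemma openin_box_top_intro:
  assumes U: "U \<subseteq> D \<rightarrow>\<^sub>E R"
    and P: "\<And>f. f\<in>U \<Longrightarrow> \<exists>S\<subseteq>D. |S| <o k \<and> (\<forall>g\<in>D \<rightarrow>\<^sub>E R. (\<forall>i\<in>S. g i = f i) \<longrightarrow> g \<in> U)"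
  shows "openin (box_top D R k) U"
proof -
  have "\<forall>f\<in>U. \<exists>S. S \<subseteq> D \<and> |S| <o k \<and> (\<forall>g\<in>D \<rightarrow>\<^sub>E R. (\<forall>i\<in>S. g i = f i) \<longrightarrow> g \<in> U)"
    using P by blast
  then obtain SS where SS0: "\<forall>f\<in>U. SS f \<subseteq> D \<and> |SS f| <o k \<and>
      (\<forall>g\<in>D \<rightarrow>\<^sub>E R. (\<forall>i\<in>SS f. g i = f i) \<longrightarrow> g \<in> U)"
    by (rule bchoice[THEN exE])
  have SS: "SS f \<subseteq> D" "|SS f| <o k" "\<And>g. g \<in> D \<rightarrow>\<^sub>E R \<Longrightarrow> \<forall>i\<in>SS f. g i = f i \<Longrightarrow> g \<in> U"
    if "f \<in> U" for f
    using SS0 that by blast+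
  define bx where "bx f = basic_box D R (\<lambda>i. if i \<in> SS f then Some (f i) else None)" for f
  have U_eq: "U = \<Union>(bx ` U)"
  proof
    show "U \<subseteq> \<Union> (bx ` U)"
    proof
      fix f assume f: "f \<in> U"
      then have "f \<in> D \<rightarrow>\<^sub>E R" using U by blast
      then have "f \<in> bx f" unfolding bx_def mem_basic_box_restr by simp
      then show "f \<in> \<Union> (bx ` U)" using f by blast
    qed
    show "\<Union> (bx ` U) \<subseteq> U"
    proof
      fix g assume "g \<in> \<Union> (bx ` U)"
      then obtain f where f: "f \<in> U" "g \<in> bx f" by blast
      then have "g \<in> D \<rightarrow>\<^sub>E R" "\<forall>i\<in>SS f. g i = f i"
        unfolding bx_def mem_basic_box_restr by simp_all
      then show "g \<in> U" using SS(3)[OF f(1)] by blast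
    qed
  qed
  have "generate_topology_on {basic_box D R s | s. dom s \<subseteq> D \<and> ran s \<subseteq> R \<and> |dom s| <o k} (\<Union>(bx ` U))"
  proof (rule generate_topology_on.UN)
    fix b assume "b \<in> bx ` U"
    then obtain f where f: "f \<in> U" "b = bx f" by blast
    have fR: "f \<in> D \<rightarrow>\<^sub>E R" using f U by blast
    have "f ` SS f \<subseteq> R" using fR SS(1)[OF f(1)] by blast
    then have "dom (\<lambda>i. if i \<in> SS f then Some (f i) else None) \<subseteq> D \<and>
       ran (\<lambda>i. if i \<in> SS f then Some (f i) else None) \<subseteq> R \<and>
       |dom (\<lambda>i. if i \<in> SS f then Some (f i) else None)| <o k"
      unfolding dom_restr ran_restr using SS(1,2)[OF f(1)] by simp
    then have "b \<in> {basic_box D R s | s. dom s \<subseteq> D \<and> ran s \<subseteq> R \<and> |dom s| <o k}"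
      unfolding f(2) bx_def by (intro CollectI exI[of _ "\<lambda>i. if i \<in> SS f then Some (f i) else None"]) simp
    then show "generate_topology_on {basic_box D R s | s. dom s \<subseteq> D \<and> ran s \<subseteq> R \<and> |dom s| <o k} b"
      by (rule generate_topology_on.Basis)
  qed
  then show "openin (box_top D R k) U"
    unfolding box_top_def openin_topology_generated_by_iff using U_eq by simp
qed

lemma topspace_box_top:
  assumes k: "Card_order k" "\<not> finite (Field k)"
  shows "topspace (box_top D R k) = D \<rightarrow>\<^sub>E R"
proof
  have e: "|{}| <o k" by (rule small_finite[OF k finite.emptyI])
  have "openin (box_top D R k) (D \<rightarrow>\<^sub>E R)"
  proof (rule openin_box_top_intro)
    fix f assume "f \<in> D \<rightarrow>\<^sub>E R"
    show "\<exists>S\<subseteq>D. |S| <o k \<and> (\<forall>g\<in>D \<rightarrow>\<^sub>E R. (\<forall>i\<in>S. g i = f i) \<longrightarrow> g \<in> D \<rightarrow>\<^sub>E R)"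
      by (rule exI[of _ "{}"]) (simp add: e)
  qed (rule subset_refl)
  then show "D \<rightarrow>\<^sub>E R \<subseteq> topspace (box_top D R k)" by (rule openin_subset)
  show "topspace (box_top D R k) \<subseteq> D \<rightarrow>\<^sub>E R"
    by (rule conjunct1[OF openin_box_top_imp[OF k openin_topspace]])
qed


definition ldet :: "'c rel \<Rightarrow> 'i set \<Rightarrow> 'a set \<Rightarrow> 'j set \<Rightarrow> (('i \<Rightarrow> 'a) \<Rightarrow> ('j \<Rightarrow> 'b)) \<Rightarrow> bool" where
  "ldet k D R D' F \<longleftrightarrow> (\<forall>f\<in>D \<rightarrow>\<^sub>E R. \<forall>j\<in>D'. \<exists>S. S \<subseteq> D \<and> |S| <o k \<and>
      (\<forall>g\<in>D \<rightarrow>\<^sub>E R. (\<forall>i\<in>S. g i = f i) \<longrightarrow> F g j = F f j))"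

lemma ldetI:
  assumes "\<And>f j. f \<in> D \<rightarrow>\<^sub>E R \<Longrightarrow> j \<in> D' \<Longrightarrow> \<exists>S. S \<subseteq> D \<and> |S| <o k \<and>
      (\<forall>g\<in>D \<rightarrow>\<^sub>E R. (\<forall>i\<in>S. g i = f i) \<longrightarrow> F g j = F f j)"
  shows "ldet k D R D' F"
  using assms unfolding ldet_def by blast

lemma continuous_map_ldet:
  assumes k: "Card_order k" "\<not> finite (Field k)" "regularCard k"
    and FS: "\<And>f. f \<in> D \<rightarrow>\<^sub>E R \<Longrightarrow> F f \<in> D' \<rightarrow>\<^sub>E R'"
    and L: "ldet k D R D' F"
  shows "continuous_map (box_top D R k) (box_top D' R' k) F"
  unfolding continuous_map_def topspace_box_top[OF k(1,2)]
proof (intro conjI allI impI)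
  show "F \<in> (D \<rightarrow>\<^sub>E R) \<rightarrow> (D' \<rightarrow>\<^sub>E R')" using FS by blast
  have st: "stable k" by (rule regularCard_stable[OF k(1,2,3)])
  fix U assume "openin (box_top D' R' k) U"
  note UU = openin_box_top_imp[OF k(1,2) this]
  show "openin (box_top D R k) {x \<in> D \<rightarrow>\<^sub>E R. F x \<in> U}"
  proof (rule openin_box_top_intro)
    show "{x \<in> D \<rightarrow>\<^sub>E R. F x \<in> U} \<subseteq> D \<rightarrow>\<^sub>E R" by (rule Collect_restrict)
    fix f assume "f \<in> {x \<in> D \<rightarrow>\<^sub>E R. F x \<in> U}"
    then have f: "f \<in> D \<rightarrow>\<^sub>E R" "F f \<in> U" by simp_all
    obtain S' where S': "S' \<subseteq> D'" "|S'| <o k" "\<forall>g\<in>D' \<rightarrow>\<^sub>E R'. (\<forall>i\<in>S'. g i = F f i) \<longrightarrow> g \<in> U"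
      using bspec[OF conjunct2[OF UU] f(2)] by blast
    have "\<forall>j\<in>S'. \<exists>S. S \<subseteq> D \<and> |S| <o k \<and> (\<forall>g\<in>D \<rightarrow>\<^sub>E R. (\<forall>i\<in>S. g i = f i) \<longrightarrow> F g j = F f j)"
      using L f(1) S'(1) unfolding ldet_def by blast
    then obtain SS where SS0: "\<forall>j\<in>S'. SS j \<subseteq> D \<and> |SS j| <o k \<and> (\<forall>g\<in>D \<rightarrow>\<^sub>E R. (\<forall>i\<in>SS j. g i = f i) \<longrightarrow> F g j = F f j)"
      by (rule bchoice[THEN exE])
    have sm: "|\<Union>j\<in>S'. SS j| <o k"
      by (rule stable_UNION[OF st S'(2)]) (use SS0 in blast)
    show "\<exists>S\<subseteq>D. |S| <o k \<and> (\<forall>g\<in>D \<rightarrow>\<^sub>E R. (\<forall>i\<in>S. g i = f i) \<longrightarrow> g \<in> {x \<in> D \<rightarrow>\<^sub>E R. F x \<in> U})"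
    proof (intro exI[of _ "\<Union>j\<in>S'. SS j"] conjI ballI impI)
      show "(\<Union>j\<in>S'. SS j) \<subseteq> D" using SS0 by blast
      show "|\<Union>j\<in>S'. SS j| <o k" by (rule sm)
      fix g assume g: "g \<in> D \<rightarrow>\<^sub>E R" "\<forall>i\<in>\<Union>j\<in>S'. SS j. g i = f i"
      have "\<forall>j\<in>S'. F g j = F f j"
      proof
        fix j assume j: "j \<in> S'"
        then have "\<forall>i\<in>SS j. g i = f i" using g(2) by blast
        then show "F g j = F f j" using SS0 j g(1) by blast
      qed
      then have "F g \<in> U" using S'(3) FS[OF g(1)] by blast
      then show "g \<in> {x \<in> D \<rightarrow>\<^sub>E R. F x \<in> U}" using g(1) by simp
    qed
  qed
qed

lemma homeomorphic_ldet:
  assumes k: "Card_order k" "\<not> finite (Field k)" "regularCard k"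
    and FS: "\<And>f. f \<in> D \<rightarrow>\<^sub>E R \<Longrightarrow> F f \<in> D' \<rightarrow>\<^sub>E R'"
    and GS: "\<And>f. f \<in> D' \<rightarrow>\<^sub>E R' \<Longrightarrow> G f \<in> D \<rightarrow>\<^sub>E R"
    and GF: "\<And>f. f \<in> D \<rightarrow>\<^sub>E R \<Longrightarrow> G (F f) = f"
    and FG: "\<And>f. f \<in> D' \<rightarrow>\<^sub>E R' \<Longrightarrow> F (G f) = f"
    and LF: "ldet k D R D' F" and LG: "ldet k D' R' D G"
  shows "box_top D R k homeomorphic_space box_top D' R' k"
  unfolding homeomorphic_space_def homeomorphic_maps_def topspace_box_top[OF k(1,2)]
  using continuous_map_ldet[OF k FS LF] continuous_map_ldet[OF k GS LG] GF FG by blast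

lemma small_Field:
  assumes "Card_order k" "|B| <o k"
  shows "|B| <o |Field k|"
  using ordLess_ordIso_trans[OF assms(2) ordIso_symmetric[OF card_of_Field_ordIso[OF assms(1)]]] .




lemma homeo_from_psi:
  fixes M :: "'m set" and K :: "'k set" and k :: "'c rel"
    and e :: "'m \<times> 'k \<Rightarrow> 'm" and e' :: "'m \<Rightarrow> 'm \<times> 'k"
    and \<psi> :: "('k \<Rightarrow> 'k) \<Rightarrow> 'm \<times> ('k \<Rightarrow> 'k)" and \<psi>i :: "'m \<times> ('k \<Rightarrow> 'k) \<Rightarrow> ('k \<Rightarrow> 'k)"
  assumes k: "Card_order k" "\<not> finite (Field k)" "regularCard k"
    and e1: "\<And>a b. a \<in> M \<Longrightarrow> b \<in> K \<Longrightarrow> e (a, b) \<in> M"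
    and e2: "\<And>a b. a \<in> M \<Longrightarrow> b \<in> K \<Longrightarrow> e' (e (a, b)) = (a, b)"
    and e3: "\<And>c. c \<in> M \<Longrightarrow> fst (e' c) \<in> M \<and> snd (e' c) \<in> K"
    and e4: "\<And>c. c \<in> M \<Longrightarrow> e (e' c) = c"
    and p1: "\<And>r. r \<in> K \<rightarrow>\<^sub>E K \<Longrightarrow> fst (\<psi> r) \<in> M \<and> snd (\<psi> r) \<in> K \<rightarrow>\<^sub>E K"
    and p2: "\<And>r. r \<in> K \<rightarrow>\<^sub>E K \<Longrightarrow> \<psi>i (\<psi> r) = r"
    and p3: "\<And>m z. m \<in> M \<Longrightarrow> z \<in> K \<rightarrow>\<^sub>E K \<Longrightarrow> \<psi>i (m, z) \<in> K \<rightarrow>\<^sub>E K"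
    and p4: "\<And>m z. m \<in> M \<Longrightarrow> z \<in> K \<rightarrow>\<^sub>E K \<Longrightarrow> \<psi> (\<psi>i (m, z)) = (m, z)"
    and L1: "\<And>r. r \<in> K \<rightarrow>\<^sub>E K \<Longrightarrow> \<exists>S. S \<subseteq> K \<and> |S| <o k \<and>
              (\<forall>r'\<in>K \<rightarrow>\<^sub>E K. (\<forall>i\<in>S. r' i = r i) \<longrightarrow> fst (\<psi> r') = fst (\<psi> r))"
    and L2: "\<And>r b. r \<in> K \<rightarrow>\<^sub>E K \<Longrightarrow> b \<in> K \<Longrightarrow> \<exists>S. S \<subseteq> K \<and> |S| <o k \<and>
              (\<forall>r'\<in>K \<rightarrow>\<^sub>E K. (\<forall>i\<in>S. r' i = r i) \<longrightarrow> snd (\<psi> r') b = snd (\<psi> r) b)"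
    and L3: "\<And>m z b. m \<in> M \<Longrightarrow> z \<in> K \<rightarrow>\<^sub>E K \<Longrightarrow> b \<in> K \<Longrightarrow> \<exists>S. S \<subseteq> K \<and> |S| <o k \<and>
              (\<forall>z'\<in>K \<rightarrow>\<^sub>E K. (\<forall>i\<in>S. z' i = z i) \<longrightarrow> \<psi>i (m, z') b = \<psi>i (m, z) b)"
  shows "box_top M K k homeomorphic_space box_top M M k"
proof -
  define row where "row x a = (\<lambda>b\<in>K. x (e (a, b)))" for x :: "'m \<Rightarrow> 'k" and a
  define F where "F x = (\<lambda>c\<in>M. e (fst (\<psi> (row x c)), snd (\<psi> (row x (fst (e' c)))) (snd (e' c))))"
    for x
  define P where "P y a = (fst (e' (y a)), \<lambda>b\<in>K. snd (e' (y (e (a, b)))))" for y :: "'m \<Rightarrow> 'm" and a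
  define G where "G y = (\<lambda>c\<in>M. \<psi>i (P y (fst (e' c))) (snd (e' c)))" for y
  have row_in: "row x a \<in> K \<rightarrow>\<^sub>E K" if "x \<in> M \<rightarrow>\<^sub>E K" "a \<in> M" for x a
    unfolding row_def using that e1 by auto
  have P_in: "fst (P y a) \<in> M \<and> snd (P y a) \<in> K \<rightarrow>\<^sub>E K" if "y \<in> M \<rightarrow>\<^sub>E M" "a \<in> M" for y a
    unfolding P_def using that e1 e3 by auto
  have FS: "F x \<in> M \<rightarrow>\<^sub>E M" if x: "x \<in> M \<rightarrow>\<^sub>E K" for x
  proof -
    have "e (fst (\<psi> (row x c)), snd (\<psi> (row x (fst (e' c)))) (snd (e' c))) \<in> M" if c: "c \<in> M" for c
    proof -
      have "fst (\<psi> (row x c)) \<in> M" using p1[OF row_in[OF x c]] by blast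
      moreover have "snd (\<psi> (row x (fst (e' c)))) \<in> K \<rightarrow>\<^sub>E K"
        using p1[OF row_in[OF x]] e3[OF c] by blast
      then have "snd (\<psi> (row x (fst (e' c)))) (snd (e' c)) \<in> K" using e3[OF c] by blast
      ultimately show ?thesis using e1 by blast
    qed
    then show ?thesis unfolding F_def by simp
  qed
  have GS: "G y \<in> M \<rightarrow>\<^sub>E K" if y: "y \<in> M \<rightarrow>\<^sub>E M" for y
  proof -
    have "\<psi>i (P y (fst (e' c))) (snd (e' c)) \<in> K" if c: "c \<in> M" for c
    proof -
      have "P y (fst (e' c)) = (fst (P y (fst (e' c))), snd (P y (fst (e' c))))" by simp
      then have "\<psi>i (P y (fst (e' c))) \<in> K \<rightarrow>\<^sub>E K"
        using p3 P_in[OF y] e3[OF c] by metis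
      then show ?thesis using e3[OF c] by blast
    qed
    then show ?thesis unfolding G_def by simp
  qed
  have GF: "G (F x) = x" if x: "x \<in> M \<rightarrow>\<^sub>E K" for x
  proof (rule PiE_ext[OF GS[OF FS[OF x]] x])
    fix c assume c: "c \<in> M"
    define a where "a = fst (e' c)"
    define b where "b = snd (e' c)"
    have a: "a \<in> M" and b: "b \<in> K" using e3[OF c] unfolding a_def b_def by auto
    have eab: "e (a, b) = c" unfolding a_def b_def using e4[OF c] by simp
    have r: "row x a \<in> K \<rightarrow>\<^sub>E K" by (rule row_in[OF x a])
    have "P (F x) a = \<psi> (row x a)"
    proof -
      have 1: "fst (e' (F x a)) = fst (\<psi> (row x a))"
      proof -
        have "F x a = e (fst (\<psi> (row x a)), snd (\<psi> (row x (fst (e' a)))) (snd (e' a)))"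
          unfolding F_def using a by simp
        moreover have "fst (\<psi> (row x a)) \<in> M" using p1[OF r] by blast
        moreover have "snd (\<psi> (row x (fst (e' a)))) (snd (e' a)) \<in> K"
          using p1[OF row_in[OF x]] e3[OF a] by blast
        ultimately show ?thesis using e2 by simp
      qed
      have 2: "(\<lambda>b\<in>K. snd (e' (F x (e (a, b))))) = snd (\<psi> (row x a))"
      proof (rule extensionalityI[where A=K])
        show "(\<lambda>b\<in>K. snd (e' (F x (e (a, b))))) \<in> extensional K" by simp
        show "snd (\<psi> (row x a)) \<in> extensional K" using p1[OF r] by (simp add: PiE_iff)
        fix b' assume b': "b' \<in> K"
        have ea: "e (a, b') \<in> M" using e1[OF a b'] .
        have "F x (e (a, b')) = e (fst (\<psi> (row x (e (a, b')))), snd (\<psi> (row x a)) b')"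
          unfolding F_def using ea e2[OF a b'] by simp
        moreover have "fst (\<psi> (row x (e (a, b')))) \<in> M" using p1[OF row_in[OF x ea]] by blast
        moreover have "snd (\<psi> (row x a)) b' \<in> K" using p1[OF r] b' by blast
        ultimately show "(\<lambda>b\<in>K. snd (e' (F x (e (a, b))))) b' = snd (\<psi> (row x a)) b'"
          using e2 b' by simp
      qed
      show ?thesis unfolding P_def 1 2 by simp
    qed
    then have "G (F x) c = \<psi>i (\<psi> (row x a)) b" unfolding G_def a_def b_def using c by simp
    also have "\<dots> = row x a b" using p2[OF r] by simp
    also have "\<dots> = x c" unfolding row_def using b eab by simp
    finally show "G (F x) c = x c" .
  qed
  have FG: "F (G y) = y" if y: "y \<in> M \<rightarrow>\<^sub>E M" for y
  proof (rule PiE_ext[OF FS[OF GS[OF y]] y])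
    have rowG: "row (G y) a = \<psi>i (P y a)" if a: "a \<in> M" for a
    proof (rule extensionalityI[where A=K])
      show "row (G y) a \<in> extensional K" unfolding row_def by simp
      have "P y a = (fst (P y a), snd (P y a))" by simp
      then show "\<psi>i (P y a) \<in> extensional K" using p3 P_in[OF y a] by (metis PiE_iff)
      fix b assume b: "b \<in> K"
      show "row (G y) a b = \<psi>i (P y a) b"
        unfolding row_def G_def using b e1[OF a b] e2[OF a b] by simp
    qed
    have psiP: "\<psi> (row (G y) a) = P y a" if a: "a \<in> M" for a
    proof -
      have "P y a = (fst (P y a), snd (P y a))" by simp
      then show ?thesis unfolding rowG[OF a] using p4 P_in[OF y a] by metis
    qed
    fix c assume c: "c \<in> M"
    define a where "a = fst (e' c)"
    define b where "b = snd (e' c)"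
    have a: "a \<in> M" and b: "b \<in> K" using e3[OF c] unfolding a_def b_def by auto
    have eab: "e (a, b) = c" unfolding a_def b_def using e4[OF c] by simp
    have "F (G y) c = e (fst (P y c), snd (P y a) b)"
      unfolding F_def using c psiP[OF c] psiP[OF a] unfolding a_def b_def by simp
    also have "\<dots> = e (fst (e' (y c)), snd (e' (y c)))"
      unfolding P_def using b eab by simp
    also have "\<dots> = y c" using e4 y c by auto
    finally show "F (G y) c = y c" .
  qed
  have LF: "ldet k M K M F"
  proof (rule ldetI)
    fix x c assume x: "x \<in> M \<rightarrow>\<^sub>E K" and c: "c \<in> M"
    define a where "a = fst (e' c)"
    define b where "b = snd (e' c)"
    have a: "a \<in> M" and b: "b \<in> K" using e3[OF c] unfolding a_def b_def by auto
    obtain S1 where S1: "S1 \<subseteq> K" "|S1| <o k"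
      "\<forall>r'\<in>K \<rightarrow>\<^sub>E K. (\<forall>i\<in>S1. r' i = row x c i) \<longrightarrow> fst (\<psi> r') = fst (\<psi> (row x c))"
      using L1[OF row_in[OF x c]] by blast
    obtain S2 where S2: "S2 \<subseteq> K" "|S2| <o k"
      "\<forall>r'\<in>K \<rightarrow>\<^sub>E K. (\<forall>i\<in>S2. r' i = row x a i) \<longrightarrow> snd (\<psi> r') b = snd (\<psi> (row x a)) b"
      using L2[OF row_in[OF x a] b] by blast
    show "\<exists>S. S \<subseteq> M \<and> |S| <o k \<and> (\<forall>g\<in>M \<rightarrow>\<^sub>E K. (\<forall>i\<in>S. g i = x i) \<longrightarrow> F g c = F x c)"
    proof (intro exI[of _ "(\<lambda>i. e (c, i)) ` S1 \<union> (\<lambda>i. e (a, i)) ` S2"] conjI ballI impI)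
      show "(\<lambda>i. e (c, i)) ` S1 \<union> (\<lambda>i. e (a, i)) ` S2 \<subseteq> M" using S1(1) S2(1) e1 a c by blast
      show "|(\<lambda>i. e (c, i)) ` S1 \<union> (\<lambda>i. e (a, i)) ` S2| <o k"
        by (rule small_Un[OF k(1,2) small_image[OF S1(2)] small_image[OF S2(2)]])
      fix g assume g: "g \<in> M \<rightarrow>\<^sub>E K" "\<forall>i\<in>(\<lambda>i. e (c, i)) ` S1 \<union> (\<lambda>i. e (a, i)) ` S2. g i = x i"
      have "\<forall>i\<in>S1. row g c i = row x c i" unfolding row_def using g(2) S1(1) by auto
      then have 1: "fst (\<psi> (row g c)) = fst (\<psi> (row x c))" using S1(3) row_in[OF g(1) c] by blast
      have "\<forall>i\<in>S2. row g a i = row x a i" unfolding row_def using g(2) S2(1) by auto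
      then have 2: "snd (\<psi> (row g a)) b = snd (\<psi> (row x a)) b" using S2(3) row_in[OF g(1) a] by blast
      show "F g c = F x c" unfolding F_def using c 1 2 unfolding a_def b_def by simp
    qed
  qed
  have LG: "ldet k M M M G"
  proof (rule ldetI)
    fix y c assume y: "y \<in> M \<rightarrow>\<^sub>E M" and c: "c \<in> M"
    define a where "a = fst (e' c)"
    define b where "b = snd (e' c)"
    have a: "a \<in> M" and b: "b \<in> K" using e3[OF c] unfolding a_def b_def by auto
    obtain S3 where S3: "S3 \<subseteq> K" "|S3| <o k"
      "\<forall>z'\<in>K \<rightarrow>\<^sub>E K. (\<forall>i\<in>S3. z' i = snd (P y a) i) \<longrightarrow> \<psi>i (fst (P y a), z') b = \<psi>i (fst (P y a), snd (P y a)) b"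
      using L3[of "fst (P y a)" "snd (P y a)" b] P_in[OF y a] b by blast
    have fin: "|{a}| <o k" by (rule small_finite[OF k(1,2)]) simp
    show "\<exists>S. S \<subseteq> M \<and> |S| <o k \<and> (\<forall>g\<in>M \<rightarrow>\<^sub>E M. (\<forall>i\<in>S. g i = y i) \<longrightarrow> G g c = G y c)"
    proof (intro exI[of _ "{a} \<union> (\<lambda>i. e (a, i)) ` S3"] conjI ballI impI)
      show "{a} \<union> (\<lambda>i. e (a, i)) ` S3 \<subseteq> M" using S3(1) e1 a by blast
      show "|{a} \<union> (\<lambda>i. e (a, i)) ` S3| <o k"
        by (rule small_Un[OF k(1,2) fin small_image[OF S3(2)]])
      fix g assume g: "g \<in> M \<rightarrow>\<^sub>E M" "\<forall>i\<in>{a} \<union> (\<lambda>i. e (a, i)) ` S3. g i = y i"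
      have 1: "fst (P g a) = fst (P y a)" unfolding P_def using g(2) by simp
      have "\<forall>i\<in>S3. snd (P g a) i = snd (P y a) i" unfolding P_def using g(2) S3(1) by auto
      then have 2: "\<psi>i (fst (P y a), snd (P g a)) b = \<psi>i (fst (P y a), snd (P y a)) b"
        using S3(3) P_in[OF g(1) a] by blast
      have "G g c = \<psi>i (fst (P g a), snd (P g a)) b" unfolding G_def a_def b_def using c by simp
      also have "\<dots> = \<psi>i (fst (P y a), snd (P y a)) b" using 1 2 by simp
      also have "\<dots> = G y c" unfolding G_def a_def b_def using c by simp
      finally show "G g c = G y c" .
    qed
  qed
  show ?thesis by (rule homeomorphic_ldet[OF k FS GS GF FG LF LG])
qed



lemma psi_construct:
  fixes M :: "'m set" and K :: "'k set" and k :: "'c rel"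
    and e :: "'m \<times> 'k \<Rightarrow> 'm" and e' :: "'m \<Rightarrow> 'm \<times> 'k"
    and h :: "'m \<times> ('k \<times> ('k \<Rightarrow> 'k)) \<Rightarrow> 'k \<times> ('k \<Rightarrow> 'k)"
    and h' :: "'k \<times> ('k \<Rightarrow> 'k) \<Rightarrow> 'm \<times> ('k \<times> ('k \<Rightarrow> 'k))"
  assumes k: "Card_order k" "\<not> finite (Field k)" "regularCard k"
    and e1: "\<And>a b. a \<in> M \<Longrightarrow> b \<in> K \<Longrightarrow> e (a, b) \<in> M"
    and e2: "\<And>a b. a \<in> M \<Longrightarrow> b \<in> K \<Longrightarrow> e' (e (a, b)) = (a, b)"
    and e3: "\<And>c. c \<in> M \<Longrightarrow> fst (e' c) \<in> M \<and> snd (e' c) \<in> K"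
    and e4: "\<And>c. c \<in> M \<Longrightarrow> e (e' c) = c"
    and cc: "cc \<in> K"
    and S: "\<And>x. x \<in> K \<Longrightarrow> S x \<subseteq> K - {cc} \<and> |S x| <o k"
    and b1: "\<And>x y. x \<in> K \<Longrightarrow> y \<in> K \<Longrightarrow> b x y \<in> K - ({cc} \<union> S x) \<and> b' x (b x y) = y"
    and b2: "\<And>x i. x \<in> K \<Longrightarrow> i \<in> K - ({cc} \<union> S x) \<Longrightarrow> b' x i \<in> K \<and> b x (b' x i) = i"
    and h1: "\<And>m l. m \<in> M \<Longrightarrow> l \<in> Sigma K (\<lambda>x. S x \<rightarrow>\<^sub>E K) \<Longrightarrow>
               h (m, l) \<in> Sigma K (\<lambda>x. S x \<rightarrow>\<^sub>E K) \<and> h' (h (m, l)) = (m, l)"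
    and h2: "\<And>l. l \<in> Sigma K (\<lambda>x. S x \<rightarrow>\<^sub>E K) \<Longrightarrow>
               h' l \<in> M \<times> Sigma K (\<lambda>x. S x \<rightarrow>\<^sub>E K) \<and> h (h' l) = l"
  shows "box_top M K k homeomorphic_space box_top M M k"
proof -
  define Lam where "Lam = Sigma K (\<lambda>x. S x \<rightarrow>\<^sub>E K)"
  define \<phi> where "\<phi> r = ((r cc, restrict r (S (r cc))), \<lambda>y\<in>K. r (b (r cc) y))" for r :: "'k \<Rightarrow> 'k"
  define \<phi>i where "\<phi>i lz = (\<lambda>i\<in>K. if i = cc then fst (fst lz)
      else if i \<in> S (fst (fst lz)) then snd (fst lz) i else snd lz (b' (fst (fst lz)) i))"
    for lz :: "('k \<times> ('k \<Rightarrow> 'k)) \<times> ('k \<Rightarrow> 'k)"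
  define \<psi> where "\<psi> r = (fst (h' (fst (\<phi> r))), \<phi>i (snd (h' (fst (\<phi> r))), snd (\<phi> r)))" for r
  define \<psi>i where "\<psi>i mz = \<phi>i (h (fst mz, fst (\<phi> (snd mz))), snd (\<phi> (snd mz)))" for mz
  have f1: "fst (\<phi> r) \<in> Lam \<and> snd (\<phi> r) \<in> K \<rightarrow>\<^sub>E K" if r: "r \<in> K \<rightarrow>\<^sub>E K" for r
  proof -
    have rc: "r cc \<in> K" using r cc by blast
    have "restrict r (S (r cc)) \<in> S (r cc) \<rightarrow>\<^sub>E K" using r S[OF rc] by auto
    moreover have "(\<lambda>y\<in>K. r (b (r cc) y)) \<in> K \<rightarrow>\<^sub>E K" using r b1[OF rc] by auto
    ultimately show ?thesis unfolding \<phi>_def Lam_def using rc by simp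
  qed
  have f2: "\<phi>i (\<phi> r) = r" if r: "r \<in> K \<rightarrow>\<^sub>E K" for r
  proof (rule PiE_ext[OF _ r])
    have rc: "r cc \<in> K" using r cc by blast
    show "\<phi>i (\<phi> r) \<in> K \<rightarrow>\<^sub>E K"
      unfolding \<phi>i_def \<phi>_def using r b2[OF rc] rc by (auto simp: PiE_iff)
    fix i assume i: "i \<in> K"
    show "\<phi>i (\<phi> r) i = r i"
    proof (cases "i = cc")
      case True then show ?thesis unfolding \<phi>i_def \<phi>_def using i by simp
    next
      case False
      show ?thesis
      proof (cases "i \<in> S (r cc)")
        case True then show ?thesis unfolding \<phi>i_def \<phi>_def using i False by simp
      next
        case F2: False
        have "b' (r cc) i \<in> K \<and> b (r cc) (b' (r cc) i) = i" using b2[OF rc] i False F2 by blast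
        then show ?thesis unfolding \<phi>i_def \<phi>_def using i False F2 by simp
      qed
    qed
  qed
  have f3: "\<phi>i (l, z) \<in> K \<rightarrow>\<^sub>E K" if l: "l \<in> Lam" and z: "z \<in> K \<rightarrow>\<^sub>E K" for l z
  proof -
    have lK: "fst l \<in> K" and ls: "snd l \<in> S (fst l) \<rightarrow>\<^sub>E K" using l unfolding Lam_def by auto
    have "(if i = cc then fst l else if i \<in> S (fst l) then snd l i else z (b' (fst l) i)) \<in> K"
      if i: "i \<in> K" for i
    proof -
      consider "i = cc" | "i \<noteq> cc" "i \<in> S (fst l)" | "i \<noteq> cc" "i \<notin> S (fst l)" by blast
      then show ?thesis
      proof cases
        case 1 then show ?thesis using lK by simp
      next
        case 2 then show ?thesis using ls by auto
      next
        case 3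
        then have "b' (fst l) i \<in> K" using b2[OF lK] i by blast
        then show ?thesis using 3 z by auto
      qed
    qed
    then show ?thesis unfolding \<phi>i_def fst_conv snd_conv restrict_PiE_iff by blast
  qed
  have f4: "\<phi> (\<phi>i (l, z)) = (l, z)" if l: "l \<in> Lam" and z: "z \<in> K \<rightarrow>\<^sub>E K" for l z
  proof -
    have lK: "fst l \<in> K" and ls: "snd l \<in> S (fst l) \<rightarrow>\<^sub>E K" using l unfolding Lam_def by auto
    have Sl: "S (fst l) \<subseteq> K - {cc}" using S[OF lK] by blast
    define r where "r = \<phi>i (l, z)"
    have rc: "r cc = fst l" unfolding r_def \<phi>i_def using cc by simp
    have 1: "restrict r (S (fst l)) = snd l"
    proof (rule PiE_ext[OF _ ls])
      show "restrict r (S (fst l)) \<in> S (fst l) \<rightarrow>\<^sub>E K"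
        using f3[OF l z] Sl unfolding r_def by auto
      fix i assume i: "i \<in> S (fst l)"
      then show "restrict r (S (fst l)) i = snd l i" unfolding r_def \<phi>i_def using Sl by auto
    qed
    have 2: "(\<lambda>y\<in>K. r (b (fst l) y)) = z"
    proof (rule PiE_ext[OF _ z])
      show "(\<lambda>y\<in>K. r (b (fst l) y)) \<in> K \<rightarrow>\<^sub>E K" using f3[OF l z] b1[OF lK] unfolding r_def by auto
      fix y assume y: "y \<in> K"
      have "b (fst l) y \<in> K - ({cc} \<union> S (fst l)) \<and> b' (fst l) (b (fst l) y) = y" using b1[OF lK y] .
      then show "(\<lambda>y\<in>K. r (b (fst l) y)) y = z y" unfolding r_def \<phi>i_def using y by auto
    qed
    show ?thesis unfolding r_def[symmetric] \<phi>_def rc 1 2 by simp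
  qed
  have f5: "fst (\<phi> r') = fst (\<phi> r)"
    if "\<forall>i\<in>insert cc (S (r cc)). r' i = r i" for r r'
  proof -
    have "r' cc = r cc" using that by simp
    moreover have "restrict r' (S (r cc)) = restrict r (S (r cc))" using that by (auto intro: restrict_ext)
    ultimately show ?thesis unfolding \<phi>_def by simp
  qed
  have f6: "snd (\<phi> r') p = snd (\<phi> r) p"
    if "\<forall>i\<in>insert cc (S (r cc)). r' i = r i" "r' (b (r cc) p) = r (b (r cc) p)" for r r' p
  proof -
    have "r' cc = r cc" using that by simp
    then show ?thesis unfolding \<phi>_def using that(2) by simp
  qed
  have f7: "\<exists>p. p \<in> K \<and> (\<forall>z z'. z' p = z p \<longrightarrow> \<phi>i (l, z') y = \<phi>i (l, z) y)" if l: "l \<in> Lam" for l y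
  proof (cases "y \<in> K \<and> y \<noteq> cc \<and> y \<notin> S (fst l)")
    case True
    have lK: "fst l \<in> K" using l unfolding Lam_def by auto
    have "b' (fst l) y \<in> K" using b2[OF lK] True by blast
    then show ?thesis using True unfolding \<phi>i_def by (intro exI[of _ "b' (fst l) y"]) simp
  next
    case False
    then show ?thesis unfolding \<phi>i_def using cc by (intro exI[of _ cc]) auto
  qed
  have sm: "insert cc (S (r cc)) \<subseteq> K \<and> |insert cc (S (r cc))| <o k" if r: "r \<in> K \<rightarrow>\<^sub>E K" for r
  proof -
    have rc: "r cc \<in> K" using r cc by blast
    have "|{cc}| <o k" by (rule small_finite[OF k(1,2)]) simp
    then have "|{cc} \<union> S (r cc)| <o k" using small_Un[OF k(1,2)] S[OF rc] by blast
    then show ?thesis using S[OF rc] cc by auto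
  qed
  have sm2: "insert q (insert cc (S (r cc))) \<subseteq> K \<and> |insert q (insert cc (S (r cc)))| <o k"
    if r: "r \<in> K \<rightarrow>\<^sub>E K" and q: "q \<in> K" for r q
  proof -
    have "|{q}| <o k" by (rule small_finite[OF k(1,2)]) simp
    then have "|{q} \<union> insert cc (S (r cc))| <o k" using small_Un[OF k(1,2)] sm[OF r] by blast
    moreover have eq: "insert q (insert cc (S (r cc))) = {q} \<union> insert cc (S (r cc))" by blast
    ultimately have "|insert q (insert cc (S (r cc)))| <o k" by (simp only:)
    moreover have "insert q (insert cc (S (r cc))) \<subseteq> K" using sm[OF r] q by blast
    ultimately show ?thesis by blast
  qed
  note H1 = h1[folded Lam_def] and H2 = h2[folded Lam_def]
  show ?thesis
  proof (rule homeo_from_psi[OF k e1 e2 e3 e4, of \<psi> \<psi>i])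
    fix r :: "'k \<Rightarrow> 'k" assume r: "r \<in> K \<rightarrow>\<^sub>E K"
    have hr: "h' (fst (\<phi> r)) \<in> M \<times> Lam" using H2 f1[OF r] by blast
    show "fst (\<psi> r) \<in> M \<and> snd (\<psi> r) \<in> K \<rightarrow>\<^sub>E K"
    proof
      show "fst (\<psi> r) \<in> M" unfolding \<psi>_def using hr by auto
      have "snd (h' (fst (\<phi> r))) \<in> Lam" using hr by auto
      then show "snd (\<psi> r) \<in> K \<rightarrow>\<^sub>E K" unfolding \<psi>_def snd_conv using f3 f1[OF r] by blast
    qed
    show "\<psi>i (\<psi> r) = r"
    proof -
      have "\<phi> (\<phi>i (snd (h' (fst (\<phi> r))), snd (\<phi> r))) = (snd (h' (fst (\<phi> r))), snd (\<phi> r))"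
        using f4 hr f1[OF r] by auto
      then have "\<psi>i (\<psi> r) = \<phi>i (h (fst (h' (fst (\<phi> r))), snd (h' (fst (\<phi> r)))), snd (\<phi> r))"
        unfolding \<psi>i_def \<psi>_def by simp
      also have "\<dots> = \<phi>i (h (h' (fst (\<phi> r))), snd (\<phi> r))" by simp
      also have "\<dots> = \<phi>i (\<phi> r)" using H2 f1[OF r] by simp
      also have "\<dots> = r" by (rule f2[OF r])
      finally show ?thesis .
    qed
  next
    fix m z assume m: "m \<in> M" and z: "z \<in> K \<rightarrow>\<^sub>E K"
    have hm: "h (m, fst (\<phi> z)) \<in> Lam \<and> h' (h (m, fst (\<phi> z))) = (m, fst (\<phi> z))"
      using H1[OF m] f1[OF z] by blast
    show "\<psi>i (m, z) \<in> K \<rightarrow>\<^sub>E K" unfolding \<psi>i_def using f3 hm f1[OF z] by simp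
    show "\<psi> (\<psi>i (m, z)) = (m, z)"
    proof -
      have "\<phi> (\<psi>i (m, z)) = (h (m, fst (\<phi> z)), snd (\<phi> z))"
        unfolding \<psi>i_def using f4 hm f1[OF z] by simp
      then have "\<psi> (\<psi>i (m, z)) = (m, \<phi>i (fst (\<phi> z), snd (\<phi> z)))"
        unfolding \<psi>_def using hm by simp
      also have "\<dots> = (m, z)" using f2[OF z] by simp
      finally show ?thesis .
    qed
  next
    fix r :: "'k \<Rightarrow> 'k" assume r: "r \<in> K \<rightarrow>\<^sub>E K"
    show "\<exists>S'. S' \<subseteq> K \<and> |S'| <o k \<and> (\<forall>r'\<in>K \<rightarrow>\<^sub>E K. (\<forall>i\<in>S'. r' i = r i) \<longrightarrow> fst (\<psi> r') = fst (\<psi> r))"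
    proof (intro exI[of _ "insert cc (S (r cc))"] conjI ballI impI)
      show "insert cc (S (r cc)) \<subseteq> K" "|insert cc (S (r cc))| <o k" using sm[OF r] by auto
      fix r' assume "r' \<in> K \<rightarrow>\<^sub>E K" and a: "\<forall>i\<in>insert cc (S (r cc)). r' i = r i"
      have "fst (\<phi> r') = fst (\<phi> r)" by (rule f5[OF a])
      then show "fst (\<psi> r') = fst (\<psi> r)" unfolding \<psi>_def by simp
    qed
  next
    fix r :: "'k \<Rightarrow> 'k" and y assume r: "r \<in> K \<rightarrow>\<^sub>E K" and y: "y \<in> K"
    define l where "l = snd (h' (fst (\<phi> r)))"
    have l: "l \<in> Lam"
    proof -
      have "h' (fst (\<phi> r)) \<in> M \<times> Lam" using H2 f1[OF r] by blast
      then show ?thesis unfolding l_def by (simp add: mem_Times_iff)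
    qed
    obtain p where p: "p \<in> K" "\<forall>z z'. z' p = z p \<longrightarrow> \<phi>i (l, z') y = \<phi>i (l, z) y"
      using f7[OF l] by blast
    have rc: "r cc \<in> K" using r cc by blast
    have q: "b (r cc) p \<in> K" using b1[OF rc p(1)] by blast
    show "\<exists>S'. S' \<subseteq> K \<and> |S'| <o k \<and> (\<forall>r'\<in>K \<rightarrow>\<^sub>E K. (\<forall>i\<in>S'. r' i = r i) \<longrightarrow> snd (\<psi> r') y = snd (\<psi> r) y)"
    proof (intro exI[of _ "insert (b (r cc) p) (insert cc (S (r cc)))"] conjI ballI impI)
      show "insert (b (r cc) p) (insert cc (S (r cc))) \<subseteq> K"
        "|insert (b (r cc) p) (insert cc (S (r cc)))| <o k" using sm2[OF r q] by auto
      fix r' assume r': "r' \<in> K \<rightarrow>\<^sub>E K" "\<forall>i\<in>insert (b (r cc) p) (insert cc (S (r cc))). r' i = r i"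
      have 1: "fst (\<phi> r') = fst (\<phi> r)" by (rule f5) (use r'(2) in blast)
      have 2: "snd (\<phi> r') p = snd (\<phi> r) p" by (rule f6) (use r'(2) in blast)+
      have "snd (\<psi> r') y = \<phi>i (l, snd (\<phi> r')) y" using 1 by (simp add: \<psi>_def l_def)
      also have "\<dots> = \<phi>i (l, snd (\<phi> r)) y" using p(2) 2 by blast
      also have "\<dots> = snd (\<psi> r) y" unfolding \<psi>_def l_def by simp
      finally show "snd (\<psi> r') y = snd (\<psi> r) y" .
    qed
  next
    fix m z y assume m: "m \<in> M" and z: "z \<in> K \<rightarrow>\<^sub>E K" and y: "y \<in> K"
    define l where "l = h (m, fst (\<phi> z))"
    have l: "l \<in> Lam" unfolding l_def using H1[OF m] f1[OF z] by blast
    obtain p where p: "p \<in> K" "\<forall>z z'. z' p = z p \<longrightarrow> \<phi>i (l, z') y = \<phi>i (l, z) y"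
      using f7[OF l] by blast
    have zc: "z cc \<in> K" using z cc by blast
    have q: "b (z cc) p \<in> K" using b1[OF zc p(1)] by blast
    show "\<exists>S'. S' \<subseteq> K \<and> |S'| <o k \<and> (\<forall>z'\<in>K \<rightarrow>\<^sub>E K. (\<forall>i\<in>S'. z' i = z i) \<longrightarrow> \<psi>i (m, z') y = \<psi>i (m, z) y)"
    proof (intro exI[of _ "insert (b (z cc) p) (insert cc (S (z cc)))"] conjI ballI impI)
      show "insert (b (z cc) p) (insert cc (S (z cc))) \<subseteq> K"
        "|insert (b (z cc) p) (insert cc (S (z cc)))| <o k" using sm2[OF z q] by auto
      fix z' assume z': "z' \<in> K \<rightarrow>\<^sub>E K" "\<forall>i\<in>insert (b (z cc) p) (insert cc (S (z cc))). z' i = z i"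
      have 1: "fst (\<phi> z') = fst (\<phi> z)" by (rule f5) (use z'(2) in blast)
      have 2: "snd (\<phi> z') p = snd (\<phi> z) p" by (rule f6) (use z'(2) in blast)+
      have "\<psi>i (m, z') y = \<phi>i (l, snd (\<phi> z')) y" using 1 by (simp add: \<psi>i_def l_def)
      also have "\<dots> = \<phi>i (l, snd (\<phi> z)) y" using p(2) 2 by blast
      also have "\<dots> = \<psi>i (m, z) y" unfolding \<psi>i_def l_def by simp
      finally show "\<psi>i (m, z') y = \<psi>i (m, z) y" .
    qed
  qed
qed



lemma diff_small:
  assumes inf: "\<not> finite A" and sm: "|B| <o |A|"
  shows "|A - B| =o |A|"
proof -
  have 1: "|A - B| \<le>o |A|" by (rule card_of_mono1) blast
  have 2: "|A| \<le>o |A - B|"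
  proof (rule ccontr)
    assume "\<not> |A| \<le>o |A - B|"
    then have "|A - B| <o |A|" using not_ordLeq_iff_ordLess card_of_Well_order by blast
    then have "|(A - B) \<union> B| <o |A|" using card_of_Un_ordLess_infinite[OF inf _ sm] by blast
    moreover have "|A| \<le>o |(A - B) \<union> B|" by (rule card_of_mono1) blast
    ultimately show False using not_ordLess_ordLeq by blast
  qed
  show ?thesis using 1 2 ordIso_iff_ordLeq by blast
qed

lemma bij_inv_facts:
  assumes "bij_betw f A B"
  shows "\<And>x. x \<in> A \<Longrightarrow> f x \<in> B \<and> inv_into A f (f x) = x"
    and "\<And>y. y \<in> B \<Longrightarrow> inv_into A f y \<in> A \<and> f (inv_into A f y) = y"
proof -
  fix x assume x: "x \<in> A"
  show "f x \<in> B \<and> inv_into A f (f x) = x"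
    using bij_betw_apply[OF assms x] bij_betw_inv_into_left[OF assms x] by simp
next
  fix y assume y: "y \<in> B"
  show "inv_into A f y \<in> A \<and> f (inv_into A f y) = y"
    using bij_betw_apply[OF bij_betw_inv_into[OF assms] y] bij_betw_inv_into_right[OF assms y] by simp
qed

lemma backward_dir:
  fixes rk :: "'k rel" and M :: "'m set"
  assumes rk: "Card_order rk" "\<not> finite (Field rk)" "regularCard rk"
    and Minf: "\<not> finite M" and KM: "|Field rk| \<le>o |M|" and MT: "|M| \<le>o |two_less rk|"
  shows "box_top M (Field rk) rk homeomorphic_space box_top M M rk"
proof -
  define K where "K = Field rk"
  have Kinf: "\<not> finite K" using rk(2) unfolding K_def .
  then have Kne: "K \<noteq> {}" by auto
  have Mne: "M \<noteq> {}" using Minf by auto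
  have "|M \<times> K| =o |M|" using card_of_Times_infinite[OF Minf Kne] KM unfolding K_def by blast
  then obtain e where e: "bij_betw e (M \<times> K) M" using card_of_ordIso by blast
  note E = bij_inv_facts[OF e]
  obtain c0 where c0: "c0 \<in> K" using Kne by blast
  have "K - {c0} \<noteq> {}" using Kinf by (metis finite.emptyI finite_insert insert_Diff_single insert_absorb2 Diff_empty)
  then obtain c1 where c1: "c1 \<in> K" "c1 \<noteq> c0" by blast
  obtain j where j: "bij_betw j K (K - {c0})" using infinite_imp_bij_betw[OF Kinf] by blast
  define S where "S x = j ` underS rk x" for x
  have uK: "underS rk x \<subseteq> K" for x unfolding K_def by (rule Order_Relation.underS_Field)
  have S: "S x \<subseteq> K - {c0} \<and> |S x| <o rk" if x: "x \<in> K" for x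
  proof
    show "S x \<subseteq> K - {c0}" unfolding S_def using j uK bij_betw_imp_surj_on by blast
    show "|S x| <o rk" unfolding S_def
      by (rule small_image[OF card_of_underS[OF rk(1) x[unfolded K_def]]])
  qed
  have "\<exists>f. bij_betw f K (K - ({c0} \<union> S x))" if x: "x \<in> K" for x
  proof -
    have "|{c0}| <o rk" by (rule small_finite[OF rk(1,2)]) simp
    then have "|{c0} \<union> S x| <o rk" using small_Un[OF rk(1,2)] S[OF x] by blast
    then have "|{c0} \<union> S x| <o |K|" unfolding K_def by (rule small_Field[OF rk(1)])
    then have "|K - ({c0} \<union> S x)| =o |K|" by (rule diff_small[OF Kinf])
    then show ?thesis using card_of_ordIso ordIso_symmetric by blast
  qed
  then obtain b where b: "\<And>x. x \<in> K \<Longrightarrow> bij_betw (b x) K (K - ({c0} \<union> S x))" by metis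
  define b' where "b' x = inv_into K (b x)" for x
  have b1: "b x y \<in> K - ({c0} \<union> S x) \<and> b' x (b x y) = y" if "x \<in> K" "y \<in> K" for x y
    using bij_inv_facts(1)[OF b[OF that(1)] that(2)] unfolding b'_def .
  have b2: "b' x i \<in> K \<and> b x (b' x i) = i" if "x \<in> K" "i \<in> K - ({c0} \<union> S x)" for x i
    using bij_inv_facts(2)[OF b[OF that(1)] that(2)] unfolding b'_def .
  define Lam where "Lam = Sigma K (\<lambda>x. S x \<rightarrow>\<^sub>E K)"
  define a where "a f = (SOME a. a \<in> K \<and> dom f = underS rk a)" for f :: "'k \<Rightarrow> bool option"
  have a: "a f \<in> K \<and> dom f = underS rk (a f)" if "f \<in> two_less rk" for f
  proof -
    have "\<exists>a. a \<in> K \<and> dom f = underS rk a" using that unfolding two_less_def K_def by blast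
    then show ?thesis unfolding a_def by (rule someI_ex)
  qed
  define \<iota> where "\<iota> f = (a f, \<lambda>i\<in>S (a f). if f (inv_into (underS rk (a f)) j i) = Some True then c1 else c0)"
    for f :: "'k \<Rightarrow> bool option"
  have ij: "inj_on j (underS rk x)" for x using inj_on_subset[OF bij_betw_imp_inj_on[OF j] uK] .
  have TL: "|two_less rk| \<le>o |Lam|"
  proof -
    have "\<iota> ` two_less rk \<subseteq> Lam"
    proof
      fix l assume "l \<in> \<iota> ` two_less rk"
      then obtain f where f: "f \<in> two_less rk" "l = \<iota> f" by blast
      show "l \<in> Lam" unfolding Lam_def f(2) \<iota>_def using a[OF f(1)] c0 c1 by auto
    qed
    moreover have "inj_on \<iota> (two_less rk)"
    proof (rule inj_onI)
      fix f g assume f: "f \<in> two_less rk" and g: "g \<in> two_less rk" and eq: "\<iota> f = \<iota> g"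
      have af: "a f = a g" using eq unfolding \<iota>_def by simp
      have eq2: "(\<lambda>i\<in>S (a f). if f (inv_into (underS rk (a f)) j i) = Some True then c1 else c0) =
                 (\<lambda>i\<in>S (a f). if g (inv_into (underS rk (a f)) j i) = Some True then c1 else c0)"
        using eq unfolding \<iota>_def af by simp
      show "f = g"
      proof
        fix u
        show "f u = g u"
        proof (cases "u \<in> underS rk (a f)")
          case True
          have ju: "j u \<in> S (a f)" unfolding S_def using True by blast
          have inv: "inv_into (underS rk (a f)) j (j u) = u" using inv_into_f_f[OF ij True] .
          have "(if f u = Some True then c1 else c0) = (if g u = Some True then c1 else c0)"
            using fun_cong[OF eq2, of "j u"] ju inv by simp
          then have tt: "f u = Some True \<longleftrightarrow> g u = Some True" using c1(2) by (auto split: if_splits)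
          have "u \<in> dom f" "u \<in> dom g" using True a[OF f] a[OF g] af by auto
          then obtain v w where "f u = Some v" "g u = Some w" by blast
          then show ?thesis using tt by (cases v; cases w) auto
        next
          case False
          then have "u \<notin> dom f" "u \<notin> dom g" using a[OF f] a[OF g] af by auto
          then show ?thesis by (simp add: domIff)
        qed
      qed
    qed
    ultimately show ?thesis using card_of_ordLeq by blast
  qed
  have MLam: "|M| \<le>o |Lam|" using ordLeq_transitive[OF MT TL] .
  have Laminf: "\<not> finite Lam" using card_of_ordLeq_infinite[OF MLam Minf] .
  have "|M \<times> Lam| =o |Lam|" using card_of_Times_infinite[OF Laminf Mne MLam] by blast
  then obtain h where h: "bij_betw h (M \<times> Lam) Lam" using card_of_ordIso by blast
  note H = bij_inv_facts[OF h]
  show ?thesis unfolding K_def[symmetric]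
  proof (rule psi_construct[OF rk, where e=e and e'="inv_into (M \<times> K) e" and cc=c0 and S=S
        and b=b and b'=b' and h=h and h'="inv_into (M \<times> Lam) h"])
    show "\<And>x y. x \<in> M \<Longrightarrow> y \<in> K \<Longrightarrow> e (x, y) \<in> M" using E(1) by blast
    show "\<And>x y. x \<in> M \<Longrightarrow> y \<in> K \<Longrightarrow> inv_into (M \<times> K) e (e (x, y)) = (x, y)" using E(1) by blast
    show "\<And>c. c \<in> M \<Longrightarrow> fst (inv_into (M \<times> K) e c) \<in> M \<and> snd (inv_into (M \<times> K) e c) \<in> K"
      using E(2) by (simp add: mem_Times_iff)
    show "\<And>c. c \<in> M \<Longrightarrow> e (inv_into (M \<times> K) e c) = c" using E(2) by blast
    show "c0 \<in> K" by (rule c0)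
    show "\<And>x. x \<in> K \<Longrightarrow> S x \<subseteq> K - {c0} \<and> |S x| <o rk" using S unfolding K_def by blast
    show "\<And>x y. x \<in> K \<Longrightarrow> y \<in> K \<Longrightarrow> b x y \<in> K - ({c0} \<union> S x) \<and> b' x (b x y) = y" by (rule b1)
    show "\<And>x i. x \<in> K \<Longrightarrow> i \<in> K - ({c0} \<union> S x) \<Longrightarrow> b' x i \<in> K \<and> b x (b' x i) = i" by (rule b2)
    show "\<And>m l. m \<in> M \<Longrightarrow> l \<in> Sigma K (\<lambda>x. S x \<rightarrow>\<^sub>E K) \<Longrightarrow>
               h (m, l) \<in> Sigma K (\<lambda>x. S x \<rightarrow>\<^sub>E K) \<and> inv_into (M \<times> Lam) h (h (m, l)) = (m, l)"
      using H(1) unfolding Lam_def by blast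
    show "\<And>l. l \<in> Sigma K (\<lambda>x. S x \<rightarrow>\<^sub>E K) \<Longrightarrow>
               inv_into (M \<times> Lam) h l \<in> M \<times> Sigma K (\<lambda>x. S x \<rightarrow>\<^sub>E K) \<and> h (inv_into (M \<times> Lam) h l) = l"
      using H(2) unfolding Lam_def by blast
  qed
qed



lemma rk_le_lt_trans:
  assumes "Card_order rk" "(x, y) \<in> rk" "(y, z) \<in> rk" "y \<noteq> z"
  shows "(x, z) \<in> rk \<and> x \<noteq> z"
proof -
  have w: "wo_rel rk" by (rule Card_order_wo_rel[OF assms(1)])
  have t: "trans rk" by (rule wo_rel.TRANS[OF w])
  have an: "antisym rk" by (rule wo_rel.ANTISYM[OF w])
  have xz: "(x, z) \<in> rk" using t assms(2,3) unfolding trans_def by blast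
  moreover have "x \<noteq> z"
  proof
    assume "x = z"
    then have "(z, y) \<in> rk" using assms(2) by simp
    then show False using an assms(3,4) unfolding antisym_def by blast
  qed
  ultimately show ?thesis by blast
qed

lemma bounded_above:
  assumes rk: "Card_order rk" "\<not> finite (Field rk)" "regularCard rk"
    and B: "B \<subseteq> Field rk" "|B| <o rk"
  shows "\<exists>c\<in>Field rk. \<forall>x\<in>B. (x, c) \<in> rk \<and> x \<noteq> c"
proof -
  have w: "wo_rel rk" by (rule Card_order_wo_rel[OF rk(1)])
  have "\<not> cofinal B rk"
  proof
    assume "cofinal B rk"
    then have "|B| =o rk" using rk(3) B(1) unfolding regularCard_def by blast
    then show False using not_ordLess_ordIso[OF B(2)] by blast
  qed
  then obtain a where a: "a \<in> Field rk" "\<forall>x\<in>B. \<not> (a \<noteq> x \<and> (a, x) \<in> rk)"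
    unfolding cofinal_def by blast
  obtain c where c: "c \<in> Field rk" "a \<noteq> c" "(a, c) \<in> rk"
    using infinite_Card_order_limit[OF rk(1,2) a(1)] by blast
  have "(x, c) \<in> rk \<and> x \<noteq> c" if x: "x \<in> B" for x
  proof (cases "x = a")
    case True then show ?thesis using c by simp
  next
    case False
    then have "(a, x) \<notin> rk" using a(2) x by auto
    moreover have "x \<in> Field rk" using x B(1) by blast
    ultimately have "(x, a) \<in> rk" using wo_rel.TOTALS[OF w] a(1) by blast
    then show ?thesis using rk_le_lt_trans[OF rk(1) _ c(3) c(2)] by blast
  qed
  then show ?thesis using c(1) by blast
qed

lemma underS_mono_lt:
  assumes "Card_order rk" "x \<in> underS rk a" "(a, c) \<in> rk" "a \<noteq> c"
  shows "x \<in> underS rk c"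
proof -
  have "(x, a) \<in> rk" "x \<noteq> a" using assms(2) unfolding underS_def by auto
  then have "(x, c) \<in> rk \<and> x \<noteq> c"
    using rk_le_lt_trans[OF assms(1) _ assms(3,4)] by blast
  then show ?thesis unfolding underS_def by blast
qed

lemma Field_le_two_less:
  assumes rk: "Card_order rk"
  shows "|Field rk| \<le>o |two_less rk|"
proof -
  define f where "f a = (\<lambda>i. if i \<in> underS rk a then Some True else None)" for a
  have w: "wo_rel rk" by (rule Card_order_wo_rel[OF rk])
  have an: "antisym rk" by (rule wo_rel.ANTISYM[OF w])
  have "f ` Field rk \<subseteq> two_less rk"
  proof
    fix y assume "y \<in> f ` Field rk"
    then obtain a where a: "a \<in> Field rk" "y = f a" by blast
    have "dom y = underS rk a" unfolding a(2) f_def by (auto simp: dom_def)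
    then show "y \<in> two_less rk" unfolding two_less_def using a(1) by blast
  qed
  moreover have "inj_on f (Field rk)"
  proof (rule inj_onI)
    fix a a' assume a: "a \<in> Field rk" and a': "a' \<in> Field rk" and eq: "f a = f a'"
    show "a = a'"
    proof (rule ccontr)
      assume ne: "a \<noteq> a'"
      have "(a, a') \<in> rk \<or> (a', a) \<in> rk" using wo_rel.TOTALS[OF w] a a' by blast
      then show False
      proof
        assume "(a, a') \<in> rk"
        then have "a \<in> underS rk a'" using ne unfolding underS_def by blast
        moreover have "a \<notin> underS rk a" unfolding underS_def by blast
        ultimately show False using fun_cong[OF eq, of a] unfolding f_def by (simp split: if_splits)
      next
        assume "(a', a) \<in> rk"
        then have "a' \<in> underS rk a" using ne unfolding underS_def by blast
        moreover have "a' \<notin> underS rk a'" unfolding underS_def by blast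
        ultimately show False using fun_cong[OF eq, of a'] unfolding f_def by (simp split: if_splits)
      qed
    qed
  qed
  ultimately show ?thesis using card_of_ordLeq by blast
qed

lemma pow_small:
  assumes rk: "Card_order rk" "\<not> finite (Field rk)" "regularCard rk"
    and Z: "|Z| <o rk"
  shows "|Pow Z| \<le>o |two_less rk|"
proof -
  obtain B where B: "B < Field rk" "|Z| =o |B|" "|B| <o rk"
    using internalize_card_of_ordLess[of Z rk] Z by blast
  obtain f where f: "bij_betw f Z B" using B(2) card_of_ordIso by blast
  obtain c where c: "c \<in> Field rk" "\<forall>x\<in>B. (x, c) \<in> rk \<and> x \<noteq> c"
    using bounded_above[OF rk _ B(3)] B(1) by blast
  have Bc: "B \<subseteq> underS rk c" using c(2) unfolding underS_def by blast
  define F where "F P = (\<lambda>i. if i \<in> underS rk c then Some (i \<in> f ` P) else None)" for P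
  have "F ` Pow Z \<subseteq> two_less rk"
  proof
    fix y assume "y \<in> F ` Pow Z"
    then obtain P where "y = F P" by blast
    then have "dom y = underS rk c" unfolding F_def by (auto simp: dom_def)
    then show "y \<in> two_less rk" unfolding two_less_def using c(1) by blast
  qed
  moreover have "inj_on F (Pow Z)"
  proof (rule inj_onI)
    fix P P' assume P: "P \<in> Pow Z" and P': "P' \<in> Pow Z" and eq: "F P = F P'"
    have fP: "f ` P \<subseteq> B" "f ` P' \<subseteq> B" using P P' f bij_betw_imp_surj_on by blast+
    have "f ` P = f ` P'"
    proof (intro set_eqI iffI)
      fix i assume i: "i \<in> f ` P"
      then have "i \<in> underS rk c" using fP Bc by blast
      then show "i \<in> f ` P'" using fun_cong[OF eq, of i] i unfolding F_def by simp
    next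
      fix i assume i: "i \<in> f ` P'"
      then have "i \<in> underS rk c" using fP Bc by blast
      then show "i \<in> f ` P" using fun_cong[OF eq, of i] i unfolding F_def by simp
    qed
    then show "P = P'"
      using inj_on_image_eq_iff[OF bij_betw_imp_inj_on[OF f]] P P' by blast
  qed
  ultimately show ?thesis using card_of_ordLeq by blast
qed

lemma small_Times:
  assumes "stable k" "|A| <o k" "|B| <o k"
  shows "|A \<times> B| <o k"
  using stable_elim[OF assms(1,2), of "\<lambda>_. B"] assms(3) by blast



definition lev :: "'k rel \<Rightarrow> ('k \<Rightarrow> bool option) \<Rightarrow> 'k" where
  "lev rk f = (SOME a. a \<in> Field rk \<and> dom f = underS rk a)"

lemma lev:
  assumes "f \<in> two_less rk"
  shows "lev rk f \<in> Field rk \<and> dom f = underS rk (lev rk f)"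
proof -
  have "\<exists>a. a \<in> Field rk \<and> dom f = underS rk a" using assms unfolding two_less_def by blast
  then show ?thesis unfolding lev_def by (rule someI_ex)
qed

definition enc :: "('d \<Rightarrow> 'k) \<Rightarrow> ('d \<Rightarrow> 'k \<Rightarrow> bool option) \<Rightarrow> 'd set \<Rightarrow> ('d \<Rightarrow> 'k)
    \<Rightarrow> ('k \<times> ('k \<times> bool) option \<times> 'k) set" where
  "enc \<iota> g A t = {(\<iota> a, None, t a) | a. a \<in> A} \<union> {(\<iota> a, Some (i, v), t a) | a i v. a \<in> A \<and> g a i = Some v}"

lemma enc_None: "(x, None, y) \<in> enc \<iota> g A t \<longleftrightarrow> (\<exists>a\<in>A. x = \<iota> a \<and> y = t a)"
  unfolding enc_def by blast

lemma enc_Some: "(x, Some (i, v), y) \<in> enc \<iota> g A t \<longleftrightarrow> (\<exists>a\<in>A. x = \<iota> a \<and> y = t a \<and> g a i = Some v)"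
  unfolding enc_def by blast

lemma enc_half:
  assumes g: "inj_on g D" and A: "A1 \<subseteq> D" "A2 \<subseteq> D"
    and i1: "inj_on \<iota>1 A1" and i2: "inj_on \<iota>2 A2"
    and eq: "enc \<iota>1 g A1 t1 = enc \<iota>2 g A2 t2" and a1: "a1 \<in> A1"
  shows "a1 \<in> A2 \<and> t2 a1 = t1 a1"
proof -
  have "(\<iota>1 a1, None, t1 a1) \<in> enc \<iota>1 g A1 t1" unfolding enc_None using a1 by blast
  then have "(\<iota>1 a1, None, t1 a1) \<in> enc \<iota>2 g A2 t2" using eq by simp
  then obtain a2 where a2: "a2 \<in> A2" "\<iota>1 a1 = \<iota>2 a2" "t1 a1 = t2 a2" unfolding enc_None by blast
  have gv: "g a1 i = Some v \<longleftrightarrow> g a2 i = Some v" for i v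
  proof
    assume "g a1 i = Some v"
    then have "(\<iota>1 a1, Some (i, v), t1 a1) \<in> enc \<iota>1 g A1 t1" unfolding enc_Some using a1 by blast
    then have "(\<iota>1 a1, Some (i, v), t1 a1) \<in> enc \<iota>2 g A2 t2" using eq by simp
    then obtain a' where a': "a' \<in> A2" "\<iota>1 a1 = \<iota>2 a'" "g a' i = Some v" unfolding enc_Some by blast
    have "a' = a2" using inj_onD[OF i2 _ a'(1) a2(1)] a'(2) a2(2) by simp
    then show "g a2 i = Some v" using a'(3) by simp
  next
    assume "g a2 i = Some v"
    then have "(\<iota>2 a2, Some (i, v), t2 a2) \<in> enc \<iota>2 g A2 t2" unfolding enc_Some using a2(1) by blast
    then have "(\<iota>2 a2, Some (i, v), t2 a2) \<in> enc \<iota>1 g A1 t1" using eq by simp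
    then obtain a' where a': "a' \<in> A1" "\<iota>2 a2 = \<iota>1 a'" "g a' i = Some v" unfolding enc_Some by blast
    have "a' = a1" using inj_onD[OF i1 _ a'(1) a1] a'(2) a2(2) by simp
    then show "g a1 i = Some v" using a'(3) by simp
  qed
  have "g a1 = g a2"
  proof
    fix i show "g a1 i = g a2 i"
    proof (cases "g a1 i")
      case None
      show ?thesis
      proof (cases "g a2 i")
        case (Some w)
        then have "g a1 i = Some w" using gv[of i w] by blast
        then show ?thesis using None by simp
      qed (use None in simp)
    next
      case (Some v)
      then have "g a2 i = Some v" using gv[of i v] by blast
      then show ?thesis using Some by simp
    qed
  qed
  then have "a1 = a2" using inj_onD[OF g _ _ ] a1 a2(1) A by blast
  then show ?thesis using a2 by simp
qed

lemma Q_bound: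
  fixes rk :: "'k rel" and D :: "'d set"
  assumes rk: "Card_order rk" "\<not> finite (Field rk)" "regularCard rk"
    and DT: "|D| \<le>o |two_less rk|"
  shows "|{(A, t). A \<subseteq> D \<and> |A| <o rk \<and> t \<in> A \<rightarrow>\<^sub>E Field rk}| \<le>o |two_less rk|"
proof -
  define K where "K = Field rk"
  define T where "T = two_less rk"
  define Q where "Q = {(A, t). A \<subseteq> D \<and> |A| <o rk \<and> t \<in> A \<rightarrow>\<^sub>E K}"
  have st: "stable rk" by (rule regularCard_stable[OF rk])
  obtain g where g: "inj_on g D" "g ` D \<subseteq> T" using DT unfolding card_of_ordLeq[symmetric] T_def by blast
  define Good where "Good A t c d \<iota> \<longleftrightarrow> c \<in> K \<and> d \<in> K \<and> inj_on \<iota> A \<and> \<iota> ` A \<subseteq> underS rk d \<and>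
      (\<forall>a\<in>A. (lev rk (g a), c) \<in> rk \<and> lev rk (g a) \<noteq> c \<and> (t a, c) \<in> rk \<and> t a \<noteq> c)"
    for A t c d and \<iota> :: "'d \<Rightarrow> 'k"
  have ex: "\<exists>c d \<iota>. Good A t c d \<iota>" if q: "(A, t) \<in> Q" for A t
  proof -
    have A: "A \<subseteq> D" "|A| <o rk" "t \<in> A \<rightarrow>\<^sub>E K" using q unfolding Q_def by auto
    define L where "L = (\<lambda>a. lev rk (g a)) ` A \<union> t ` A"
    have LK: "L \<subseteq> K"
    proof -
      have "(\<lambda>a. lev rk (g a)) ` A \<subseteq> K" using lev g A(1) unfolding K_def T_def by blast
      moreover have "t ` A \<subseteq> K" using A(3) by blast
      ultimately show ?thesis unfolding L_def by blast
    qed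
    have Ls: "|L| <o rk" unfolding L_def
      by (rule small_Un[OF rk(1,2) small_image[OF A(2)] small_image[OF A(2)]])
    obtain c where c: "c \<in> K" "\<forall>x\<in>L. (x, c) \<in> rk \<and> x \<noteq> c"
      using bounded_above[OF rk LK[unfolded K_def] Ls] unfolding K_def by blast
    obtain B where B: "B < Field rk" "|A| =o |B|" "|B| <o rk"
      using internalize_card_of_ordLess[of A rk] A(2) by blast
    obtain \<iota> where \<iota>: "bij_betw \<iota> A B" using B(2) card_of_ordIso by blast
    obtain d where d: "d \<in> Field rk" "\<forall>x\<in>B. (x, d) \<in> rk \<and> x \<noteq> d"
      using bounded_above[OF rk _ B(3)] B(1) by blast
    have "\<iota> ` A \<subseteq> underS rk d" using d(2) bij_betw_imp_surj_on[OF \<iota>] unfolding underS_def by blast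
    then have "Good A t c d \<iota>" unfolding Good_def using c d(1) bij_betw_imp_inj_on[OF \<iota>]
      unfolding L_def K_def by blast
    then show ?thesis by blast
  qed
  define ch where "ch q = (SOME cdi. Good (fst q) (snd q) (fst cdi) (fst (snd cdi)) (snd (snd cdi)))"
    for q :: "'d set \<times> ('d \<Rightarrow> 'k)"
  have chG: "Good (fst q) (snd q) (fst (ch q)) (fst (snd (ch q))) (snd (snd (ch q)))" if "q \<in> Q" for q
  proof -
    have "(fst q, snd q) \<in> Q" using that by simp
    from ex[OF this] obtain c d \<iota> where "Good (fst q) (snd q) c d \<iota>" by blast
    then have "\<exists>cdi. Good (fst q) (snd q) (fst cdi) (fst (snd cdi)) (snd (snd cdi))" by (intro exI[of _ "(c, d, \<iota>)"]) simp
    then show ?thesis unfolding ch_def by (rule someI_ex)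
  qed
  define Enc where "Enc q = ((fst (ch q), fst (snd (ch q))), enc (snd (snd (ch q))) g (fst q) (snd q))" for q
  define Z where "Z p = underS rk (snd p) \<times> insert None (Some ` (underS rk (fst p) \<times> (UNIV :: bool set))) \<times> underS rk (fst p)"
    for p :: "'k \<times> 'k"
  have Enc_in: "Enc ` Q \<subseteq> Sigma (K \<times> K) (\<lambda>p. Pow (Z p))"
  proof
    fix y assume "y \<in> Enc ` Q"
    then obtain q where q: "q \<in> Q" "y = Enc q" by blast
    obtain A t where At: "q = (A, t)" by (cases q)
    define c where "c = fst (ch q)"
    define d where "d = fst (snd (ch q))"
    define \<iota> where "\<iota> = snd (snd (ch q))"
    have G: "Good A t c d \<iota>" using chG[OF q(1)] unfolding c_def d_def \<iota>_def At by simp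
    have A: "A \<subseteq> D" using q(1) unfolding Q_def At by auto
    have "enc \<iota> g A t \<subseteq> Z (c, d)"
    proof
      fix x assume x: "x \<in> enc \<iota> g A t"
      then consider a where "a \<in> A" "x = (\<iota> a, None, t a)"
        | a i v where "a \<in> A" "g a i = Some v" "x = (\<iota> a, Some (i, v), t a)"
        unfolding enc_def by blast
      then show "x \<in> Z (c, d)"
      proof cases
        case 1
        have "\<iota> a \<in> underS rk d" "t a \<in> underS rk c"
          using G 1(1) unfolding Good_def underS_def by auto
        then show ?thesis unfolding Z_def 1(2) by simp
      next
        case 2
        have ua: "\<iota> a \<in> underS rk d" "t a \<in> underS rk c"
          using G 2(1) unfolding Good_def underS_def by auto
        have gT: "g a \<in> two_less rk" using g(2) A 2(1) unfolding T_def by blast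
        have "i \<in> dom (g a)" using 2(2) by blast
        then have "i \<in> underS rk (lev rk (g a))" using lev[OF gT] by simp
        moreover have "(lev rk (g a), c) \<in> rk" "lev rk (g a) \<noteq> c" using G 2(1) unfolding Good_def by auto
        ultimately have "i \<in> underS rk c" using underS_mono_lt[OF rk(1)] by blast
        then show ?thesis unfolding Z_def 2(3) using ua by simp
      qed
    qed
    moreover have "c \<in> K" "d \<in> K" using G unfolding Good_def by auto
    moreover have "Enc q = ((c, d), enc \<iota> g A t)" unfolding Enc_def c_def d_def \<iota>_def using At by simp
    ultimately show "y \<in> Sigma (K \<times> K) (\<lambda>p. Pow (Z p))" unfolding q(2) by simp
  qed
  have Enc_inj: "inj_on Enc Q"
  proof (rule inj_onI)
    fix q1 q2 assume q1: "q1 \<in> Q" and q2: "q2 \<in> Q" and eq: "Enc q1 = Enc q2"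
    obtain A1 t1 where At1: "q1 = (A1, t1)" by (cases q1)
    obtain A2 t2 where At2: "q2 = (A2, t2)" by (cases q2)
    have G1: "inj_on (snd (snd (ch q1))) A1" using chG[OF q1] unfolding Good_def At1 by simp
    have G2: "inj_on (snd (snd (ch q2))) A2" using chG[OF q2] unfolding Good_def At2 by simp
    have A1: "A1 \<subseteq> D" "t1 \<in> A1 \<rightarrow>\<^sub>E K" using q1 unfolding Q_def At1 by auto
    have A2: "A2 \<subseteq> D" "t2 \<in> A2 \<rightarrow>\<^sub>E K" using q2 unfolding Q_def At2 by auto
    have e: "enc (snd (snd (ch q1))) g A1 t1 = enc (snd (snd (ch q2))) g A2 t2"
      using eq unfolding Enc_def At1 At2 by simp
    have h1: "a \<in> A2 \<and> t2 a = t1 a" if "a \<in> A1" for a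
      by (rule enc_half[OF g(1) A1(1) A2(1) G1 G2 e that])
    have h2: "a \<in> A1 \<and> t1 a = t2 a" if "a \<in> A2" for a
      by (rule enc_half[OF g(1) A2(1) A1(1) G2 G1 e[symmetric] that])
    have AA: "A1 = A2" using h1 h2 by blast
    have "t1 = t2" by (rule PiE_ext[OF A1(2)]) (use A2(2) AA h1 in auto)
    then show "q1 = q2" unfolding At1 At2 AA by simp
  qed
  have QS: "|Q| \<le>o |Sigma (K \<times> K) (\<lambda>p. Pow (Z p))|"
    unfolding card_of_ordLeq[symmetric] using Enc_inj Enc_in by blast
  have KT: "|K| \<le>o |T|" unfolding K_def T_def by (rule Field_le_two_less[OF rk(1)])
  have Tinf: "\<not> finite T" using card_of_ordLeq_infinite[OF KT rk(2)[folded K_def]] .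
  have KKT: "|K \<times> K| \<le>o |T|"
    using ordIso_ordLeq_trans[OF card_of_Times_same_infinite[OF rk(2)[folded K_def]] KT] .
  have ZT: "|Pow (Z p)| \<le>o |T|" if p: "p \<in> K \<times> K" for p
  proof -
    have u1: "|underS rk (fst p)| <o rk" using card_of_underS[OF rk(1)] p unfolding K_def by auto
    have u2: "|underS rk (snd p)| <o rk" using card_of_underS[OF rk(1)] p unfolding K_def by auto
    have "|UNIV :: bool set| <o rk" by (rule small_finite[OF rk(1,2)]) simp
    then have "|underS rk (fst p) \<times> (UNIV :: bool set)| <o rk" by (rule small_Times[OF st u1])
    then have "|Some ` (underS rk (fst p) \<times> (UNIV :: bool set))| <o rk" by (rule small_image)
    moreover have "|{None :: ('k \<times> bool) option}| <o rk" by (rule small_finite[OF rk(1,2)]) simp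
    ultimately have "|{None} \<union> Some ` (underS rk (fst p) \<times> (UNIV :: bool set))| <o rk"
      using small_Un[OF rk(1,2)] by blast
    then have o: "|insert None (Some ` (underS rk (fst p) \<times> (UNIV :: bool set)))| <o rk" by simp
    have "|Z p| <o rk" unfolding Z_def
      by (rule small_Times[OF st u2 small_Times[OF st o u1]])
    then show ?thesis unfolding T_def by (rule pow_small[OF rk])
  qed
  have "|Sigma (K \<times> K) (\<lambda>p. Pow (Z p))| \<le>o |T|"
    by (rule card_of_Sigma_ordLeq_infinite[OF Tinf KKT]) (use ZT in blast)
  then have "|Q| \<le>o |T|" using ordLeq_transitive[OF QS] by blast
  then show ?thesis unfolding Q_def K_def T_def .
qed



definition chs :: "'i set \<Rightarrow> ('i \<Rightarrow> 'd \<Rightarrow> 'k) \<Rightarrow> 'd set \<Rightarrow> ('d \<Rightarrow> 'k) \<Rightarrow> 'i" where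
  "chs I x A t = (SOME a. a \<in> I \<and> (\<forall>i\<in>A. x a i = t i))"

lemma chs:
  assumes "\<exists>a\<in>I. \<forall>i\<in>A. x a i = t i"
  shows "chs I x A t \<in> I \<and> (\<forall>i\<in>A. x (chs I x A t) i = t i)"
proof -
  have "\<exists>a. a \<in> I \<and> (\<forall>i\<in>A. x a i = t i)" using assms by blast
  then show ?thesis unfolding chs_def by (rule someI_ex)
qed

inductive stg :: "'k rel \<Rightarrow> 'i set \<Rightarrow> ('i \<Rightarrow> 'd set) \<Rightarrow> ('i \<Rightarrow> 'd \<Rightarrow> 'k) \<Rightarrow> 'k \<Rightarrow> 'd \<Rightarrow> bool"
  for rk I S x where
  stgI: "\<xi> \<in> Field rk \<Longrightarrow> \<forall>y\<in>A. \<exists>\<eta>. (\<eta>, \<xi>) \<in> rk \<and> \<eta> \<noteq> \<xi> \<and> stg rk I S x \<eta> y \<Longrightarrow>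
    |A| <o rk \<Longrightarrow> t \<in> A \<rightarrow>\<^sub>E Field rk \<Longrightarrow> (\<exists>a\<in>I. \<forall>i\<in>A. x a i = t i) \<Longrightarrow>
    z \<in> S (chs I x A t) \<Longrightarrow> stg rk I S x \<xi> z"

lemma le_T_of_small:
  assumes rk: "Card_order rk" and s: "|B| <o rk"
  shows "|B| \<le>o |two_less rk|"
proof -
  have "|B| <o |Field rk|" by (rule small_Field[OF rk s])
  then have "|B| \<le>o |Field rk|" by (rule ordLess_imp_ordLeq)
  then show ?thesis using ordLeq_transitive Field_le_two_less[OF rk] by blast
qed

lemma antichain_bound:
  fixes rk :: "'k rel" and I :: "'i set" and D :: "'d set"
    and S :: "'i \<Rightarrow> 'd set" and x :: "'i \<Rightarrow> 'd \<Rightarrow> 'k"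
  assumes rk: "Card_order rk" "\<not> finite (Field rk)" "regularCard rk"
    and S: "\<And>a. a \<in> I \<Longrightarrow> |S a| <o rk"
    and xK: "\<And>a i. a \<in> I \<Longrightarrow> i \<in> S a \<Longrightarrow> x a i \<in> Field rk"
    and AC: "\<And>a b. a \<in> I \<Longrightarrow> b \<in> I \<Longrightarrow> a \<noteq> b \<Longrightarrow> \<exists>i\<in>S a \<inter> S b. x a i \<noteq> x b i"
  shows "|I| \<le>o |two_less rk|"
proof (rule ccontr)
  assume nle: "\<not> |I| \<le>o |two_less rk|"
  define K where "K = Field rk"
  define T where "T = two_less rk"
  have w: "wo_rel rk" by (rule Card_order_wo_rel[OF rk(1)])
  have KT: "|K| \<le>o |T|" unfolding K_def T_def by (rule Field_le_two_less[OF rk(1)])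
  have Tinf: "\<not> finite T" using card_of_ordLeq_infinite[OF KT rk(2)[folded K_def]] .
  define Q where "Q P = {(A, t). A \<subseteq> P \<and> |A| <o rk \<and> t \<in> A \<rightarrow>\<^sub>E K}" for P :: "'d set"
  define V where "V P = {q \<in> Q P. \<exists>a\<in>I. \<forall>i\<in>fst q. x a i = snd q i}" for P
  have VT: "|V P| \<le>o |T|" if "|P| \<le>o |T|" for P
  proof -
    have "|Q P| \<le>o |T|" using Q_bound[OF rk that[unfolded T_def]] unfolding Q_def K_def T_def .
    moreover have "|V P| \<le>o |Q P|" unfolding V_def by (rule card_of_mono1) blast
    ultimately show ?thesis using ordLeq_transitive by blast
  qed
  have VS: "|S (chs I x (fst q) (snd q))| \<le>o |T|" "chs I x (fst q) (snd q) \<in> I" if "q \<in> V P" for q P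
  proof -
    have ex: "\<exists>a\<in>I. \<forall>i\<in>fst q. x a i = snd q i" using that unfolding V_def by blast
    have c: "chs I x (fst q) (snd q) \<in> I" using chs[OF ex] by blast
    then show "chs I x (fst q) (snd q) \<in> I" .
    show "|S (chs I x (fst q) (snd q))| \<le>o |T|" unfolding T_def by (rule le_T_of_small[OF rk(1) S[OF c]])
  qed
  define St where "St \<xi> = {z. stg rk I S x \<xi> z}" for \<xi>
  define Pre where "Pre \<xi> = {y. \<exists>\<eta>. (\<eta>, \<xi>) \<in> rk \<and> \<eta> \<noteq> \<xi> \<and> stg rk I S x \<eta> y}" for \<xi>
  have St_sub: "St \<xi> \<subseteq> (\<Union>q\<in>V (Pre \<xi>). S (chs I x (fst q) (snd q)))" for \<xi>
  proof
    fix z assume "z \<in> St \<xi>"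
    then have "stg rk I S x \<xi> z" unfolding St_def by simp
    then show "z \<in> (\<Union>q\<in>V (Pre \<xi>). S (chs I x (fst q) (snd q)))"
    proof cases
      case (stgI A t)
      have "(A, t) \<in> V (Pre \<xi>)" unfolding V_def Q_def Pre_def K_def using stgI by auto
      then show ?thesis using stgI(6) by force
    qed
  qed
  have Pre_eq: "Pre \<xi> = (\<Union>\<eta>\<in>underS rk \<xi>. St \<eta>)" for \<xi>
    unfolding Pre_def St_def underS_def by blast
  have StT: "|St \<xi>| \<le>o |T|" for \<xi>
  proof (induction \<xi> rule: wo_rel.well_order_induct[OF w])
    case (1 \<xi>)
    have "|underS rk \<xi>| \<le>o |T|"
      using ordLeq_transitive[OF card_of_mono1[OF Order_Relation.underS_Field] KT[unfolded K_def]] .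
    moreover have "\<forall>\<eta>\<in>underS rk \<xi>. |St \<eta>| \<le>o |T|" using 1 unfolding underS_def by blast
    ultimately have "|Pre \<xi>| \<le>o |T|" unfolding Pre_eq by (rule card_of_UNION_ordLeq_infinite[OF Tinf])
    then have "|V (Pre \<xi>)| \<le>o |T|" by (rule VT)
    then have "|\<Union>q\<in>V (Pre \<xi>). S (chs I x (fst q) (snd q))| \<le>o |T|"
      by (rule card_of_UNION_ordLeq_infinite[OF Tinf]) (use VS in blast)
    then show ?case using ordLeq_transitive[OF card_of_mono1[OF St_sub]] by blast
  qed
  define C where "C = (\<Union>\<xi>\<in>K. St \<xi>)"
  have CT: "|C| \<le>o |T|" unfolding C_def
    by (rule card_of_UNION_ordLeq_infinite[OF Tinf KT]) (use StT in blast)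
  define Ch where "Ch = (\<lambda>q. chs I x (fst q) (snd q)) ` V C"
  have ChT: "|Ch| \<le>o |T|" unfolding Ch_def using ordLeq_transitive[OF card_of_image VT[OF CT]] .
  have "\<not> I \<subseteq> Ch"
  proof
    assume "I \<subseteq> Ch"
    then have "|I| \<le>o |T|" using ordLeq_transitive[OF card_of_mono1 ChT] by blast
    then show False using nle unfolding T_def by blast
  qed
  then obtain a where a: "a \<in> I" "a \<notin> Ch" by blast
  define A where "A = S a \<inter> C"
  define t where "t = restrict (x a) A"
  have As: "|A| <o rk" unfolding A_def by (rule small_subset[OF S[OF a(1)]]) blast
  have tK: "t \<in> A \<rightarrow>\<^sub>E K" unfolding t_def A_def K_def using xK[OF a(1)] by auto
  have val: "\<exists>b\<in>I. \<forall>i\<in>A. x b i = t i" using a(1) unfolding t_def by auto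
  have VC: "(A, t) \<in> V C" unfolding V_def Q_def using As tK val unfolding A_def by auto
  define a' where "a' = chs I x A t"
  have a': "a' \<in> I" "\<forall>i\<in>A. x a' i = t i" using chs[OF val] unfolding a'_def by auto
  have "a' \<in> Ch" unfolding Ch_def a'_def using VC by force
  then have ne: "a' \<noteq> a" using a(2) by blast
  have "\<forall>y\<in>A. \<exists>\<eta>. \<eta> \<in> K \<and> stg rk I S x \<eta> y"
  proof
    fix y assume "y \<in> A"
    then have "y \<in> C" unfolding A_def by blast
    then obtain \<eta> where "\<eta> \<in> K" "y \<in> St \<eta>" unfolding C_def by blast
    then show "\<exists>\<eta>. \<eta> \<in> K \<and> stg rk I S x \<eta> y" unfolding St_def by blast
  qed
  then obtain lv where lv: "\<forall>y\<in>A. lv y \<in> K \<and> stg rk I S x (lv y) y" by (rule bchoice[THEN exE])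
  have "lv ` A \<subseteq> Field rk" using lv unfolding K_def by blast
  moreover have "|lv ` A| <o rk" by (rule small_image[OF As])
  ultimately obtain \<xi> where \<xi>: "\<xi> \<in> Field rk" "\<forall>y\<in>lv ` A. (y, \<xi>) \<in> rk \<and> y \<noteq> \<xi>"
    using bounded_above[OF rk] by blast
  have APre: "\<forall>y\<in>A. \<exists>\<eta>. (\<eta>, \<xi>) \<in> rk \<and> \<eta> \<noteq> \<xi> \<and> stg rk I S x \<eta> y"
  proof
    fix y assume y: "y \<in> A"
    then have "(lv y, \<xi>) \<in> rk \<and> lv y \<noteq> \<xi>" using \<xi>(2) by blast
    then show "\<exists>\<eta>. (\<eta>, \<xi>) \<in> rk \<and> \<eta> \<noteq> \<xi> \<and> stg rk I S x \<eta> y" using lv y by blast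
  qed
  have Sa'C: "S a' \<subseteq> C"
  proof
    fix z assume "z \<in> S a'"
    then have "stg rk I S x \<xi> z"
      using stgI[OF \<xi>(1) APre As tK[unfolded K_def] val] unfolding a'_def by blast
    then show "z \<in> C" unfolding C_def St_def K_def using \<xi>(1) by blast
  qed
  obtain i where i: "i \<in> S a' \<inter> S a" "x a' i \<noteq> x a i" using AC[OF a'(1) a(1) ne] by blast
  have "i \<in> A" unfolding A_def using i(1) Sa'C by blast
  then have "x a' i = x a i" using a'(2) unfolding t_def by simp
  then show False using i(2) by simp
qed



lemma forward_dir:
  fixes rk :: "'k rel" and M :: "'m set"
  assumes rk: "Card_order rk" "\<not> finite (Field rk)" "regularCard rk"
    and Mne: "M \<noteq> {}"
    and hom: "box_top M (Field rk) rk homeomorphic_space box_top M M rk"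
  shows "|M| \<le>o |two_less rk|"
proof -
  define K where "K = Field rk"
  obtain f g where fg: "homeomorphic_maps (box_top M K rk) (box_top M M rk) f g"
    using hom unfolding homeomorphic_space_def K_def by blast
  have cf: "continuous_map (box_top M K rk) (box_top M M rk) f"
    and gS: "\<And>y. y \<in> M \<rightarrow>\<^sub>E M \<Longrightarrow> g y \<in> M \<rightarrow>\<^sub>E K"
    and fg2: "\<And>y. y \<in> M \<rightarrow>\<^sub>E M \<Longrightarrow> f (g y) = y"
  proof -
    show "continuous_map (box_top M K rk) (box_top M M rk) f" using fg unfolding homeomorphic_maps_def by blast
    have cg: "continuous_map (box_top M M rk) (box_top M K rk) g" using fg unfolding homeomorphic_maps_def by blast
    fix y assume y: "y \<in> M \<rightarrow>\<^sub>E M"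
    have "g \<in> topspace (box_top M M rk) \<rightarrow> topspace (box_top M K rk)"
      using cg unfolding continuous_map_def by blast
    then show "g y \<in> M \<rightarrow>\<^sub>E K" using y unfolding topspace_box_top[OF rk(1,2)] by blast
    show "f (g y) = y" using fg y unfolding homeomorphic_maps_def topspace_box_top[OF rk(1,2)] by blast
  qed
  obtain m0 where m0: "m0 \<in> M" using Mne by blast
  have fin: "|{m0}| <o rk" by (rule small_finite[OF rk(1,2)]) simp
  define U where "U a = {y \<in> M \<rightarrow>\<^sub>E M. y m0 = a}" for a
  have Uo: "openin (box_top M M rk) (U a)" for a
  proof (rule openin_box_top_intro)
    show "U a \<subseteq> M \<rightarrow>\<^sub>E M" unfolding U_def by (rule Collect_restrict)
    fix y assume "y \<in> U a"
    then show "\<exists>S\<subseteq>M. |S| <o rk \<and> (\<forall>g\<in>M \<rightarrow>\<^sub>E M. (\<forall>i\<in>S. g i = y i) \<longrightarrow> g \<in> U a)"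
      using fin m0 unfolding U_def by (intro exI[of _ "{m0}"]) simp
  qed
  define V where "V a = {x \<in> M \<rightarrow>\<^sub>E K. f x \<in> U a}" for a
  have Vo: "openin (box_top M K rk) (V a)" for a
    using cf Uo unfolding continuous_map_def topspace_box_top[OF rk(1,2)] V_def by blast
  define xx where "xx a = g (\<lambda>i\<in>M. a)" for a
  have xxV: "xx a \<in> V a" if a: "a \<in> M" for a
  proof -
    have c: "(\<lambda>i\<in>M. a) \<in> M \<rightarrow>\<^sub>E M" using a by simp
    have "f (xx a) = (\<lambda>i\<in>M. a)" unfolding xx_def by (rule fg2[OF c])
    then show ?thesis unfolding V_def U_def xx_def using gS[OF c] c m0 by simp
  qed
  have "\<forall>a\<in>M. \<exists>S. S \<subseteq> M \<and> |S| <o rk \<and> (\<forall>z\<in>M \<rightarrow>\<^sub>E K. (\<forall>i\<in>S. z i = xx a i) \<longrightarrow> z \<in> V a)"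
  proof
    fix a assume a: "a \<in> M"
    show "\<exists>S. S \<subseteq> M \<and> |S| <o rk \<and> (\<forall>z\<in>M \<rightarrow>\<^sub>E K. (\<forall>i\<in>S. z i = xx a i) \<longrightarrow> z \<in> V a)"
      using bspec[OF conjunct2[OF openin_box_top_imp[OF rk(1,2) Vo]] xxV[OF a]] by blast
  qed
  then obtain SS where SS: "\<forall>a\<in>M. SS a \<subseteq> M \<and> |SS a| <o rk \<and>
      (\<forall>z\<in>M \<rightarrow>\<^sub>E K. (\<forall>i\<in>SS a. z i = xx a i) \<longrightarrow> z \<in> V a)"
    by (rule bchoice[THEN exE])
  have xxK: "xx a \<in> M \<rightarrow>\<^sub>E K" if "a \<in> M" for a using xxV[OF that] unfolding V_def by blast
  show ?thesis
  proof (rule antichain_bound[OF rk, of M SS xx])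
    fix a assume "a \<in> M" then show "|SS a| <o rk" using SS by blast
  next
    fix a i assume a: "a \<in> M" and i: "i \<in> SS a"
    then have "i \<in> M" using SS by blast
    then show "xx a i \<in> Field rk" using xxK[OF a] unfolding K_def by blast
  next
    fix a b assume a: "a \<in> M" and b: "b \<in> M" and ne: "a \<noteq> b"
    show "\<exists>i\<in>SS a \<inter> SS b. xx a i \<noteq> xx b i"
    proof (rule ccontr)
      assume "\<not> (\<exists>i\<in>SS a \<inter> SS b. xx a i \<noteq> xx b i)"
      then have agree: "\<forall>i\<in>SS a \<inter> SS b. xx a i = xx b i" by blast
      define z where "z = (\<lambda>i\<in>M. if i \<in> SS a then xx a i else xx b i)"
      have zK: "z \<in> M \<rightarrow>\<^sub>E K" unfolding z_def using xxK[OF a] xxK[OF b] by auto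
      have "\<forall>i\<in>SS a. z i = xx a i" unfolding z_def using SS a by auto
      then have za: "z \<in> V a" using SS a zK by blast
      have "\<forall>i\<in>SS b. z i = xx b i" unfolding z_def using SS b agree by auto
      then have zb: "z \<in> V b" using SS b zK by blast
      have "f z m0 = a" "f z m0 = b" using za zb unfolding V_def U_def by auto
      then show False using ne by simp
    qed
  qed
qed

theorem mainTheorem5:
  fixes rk :: "'k rel" and rm :: "'m rel"
  assumes "Card_order rk" and "BNF_Cardinal_Arithmetic.cinfinite rk" and "regularCard rk"
    and "Card_order rm" and "cof_is rm rk" and "ordLess2 rk rm"
  shows "(box_top (Field rm) (Field rk) rk homeomorphic_space box_top (Field rm) (Field rm) rk)
         \<longleftrightarrow> ordLeq2 (card_of (Field rm)) (card_of (two_less rk))"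
proof -
  have rk: "Card_order rk" "\<not> finite (Field rk)" "regularCard rk"
    using assms(1,2,3) unfolding cinfinite_def by auto
  have "|Field rk| <o |Field rm|"
    using ordIso_ordLess_trans[OF card_of_Field_ordIso[OF assms(1)]
        ordLess_ordIso_trans[OF assms(6) ordIso_symmetric[OF card_of_Field_ordIso[OF assms(4)]]]] .
  then have KM: "|Field rk| \<le>o |Field rm|" by (rule ordLess_imp_ordLeq)
  have Minf: "\<not> finite (Field rm)" using card_of_ordLeq_infinite[OF KM rk(2)] .
  then have Mne: "Field rm \<noteq> {}" by auto
  show ?thesis
  proof
    assume "box_top (Field rm) (Field rk) rk homeomorphic_space box_top (Field rm) (Field rm) rk"
    then show "|Field rm| \<le>o |two_less rk|" by (rule forward_dir[OF rk Mne])
  next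
    assume "|Field rm| \<le>o |two_less rk|"
    then show "box_top (Field rm) (Field rk) rk homeomorphic_space box_top (Field rm) (Field rm) rk"
      by (rule backward_dir[OF rk Minf KM])
  qed
qed


end
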